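(* Let $\mathbf p=(p_j(X))_{j\ge1,\,X\in\mathcal X}$ follow the dependent GEM prior $\mathrm{DGEM}(M)$ with $M>0$ (defined in the context), and let $H_{\mathrm{Simp}}(X)=1-\sum_{j\ge1}p_j(X)^2$ be the Simpson diversity at covariate $X$. Then for every $X\in\mathcal X$, $$\mathbb E\big(H_{\mathrm{Simp}}(X)\big)=\frac{M}{1+M},\qquad \operatorname{Var}\big(H_{\mathrm{Simp}}(X)\big)=\frac{2M}{(M+1)^2(M+2)(M+3)},$$ and for any two covariates $X_1,X_2\in\mathcal X$, $$\operatorname{Cov}\big(H_{\mathrm{Simp}}(X_1),H_{\mathrm{Simp}}(X_2)\big)=\frac{\nu_{2,2}(1-\omega_{2,0})+2\nu_{2,0}\gamma_{2,2}}{(1-\omega_{2,0})(1-\omega_{2,2})}-\nu_{1,0}^2,$$ where, with $V=V_1$ one of the Beta processes of the construction, $\nu_{i,j}=\mathbb E[V(X_1)^iV(X_2)^j]$, $\omega_{i,j}=\mathbb E[(1-V(X_1))^i(1-V(X_2))^j]$ and $\gamma_{i,j}=\mathbb E[V(X_1)^i(1-V(X_2))^j]$.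
   Context: Dependent GEM prior $\mathrm{DGEM}(M)$: let $\mathcal X\subset\mathbb R$ be the covariate space, $M>0$, $\sigma_Z>0$, and let $\tilde K_\lambda$ be a normalized covariance function on $\mathcal X$ (i.e. $\tilde K_\lambda(X,X)=1$) depending only on $X_1-X_2$, e.g. squared exponential $\exp(-(X_1-X_2)^2/(2\lambda^2))$, Ornstein–Uhlenbeck $\exp(-|X_1-X_2|/\lambda)$ or rational quadratic $(1+(X_1-X_2)^2/(2\lambda^2))^{-1}$. Let $Z_1,Z_2,\dots$ be i.i.d. centered Gaussian processes on $\mathcal X$ with covariance $\sigma_Z^2\tilde K_\lambda$. Let $\Phi_{\sigma_Z}$ be the CDF of $\mathcal N(0,\sigma_Z^2)$ and $F_M^{-1}(u)=1-(1-u)^{1/M}$ the inverse CDF of the $\mathrm{Beta}(1,M)$ distribution. Set $V_j(X)=F_M^{-1}(\Phi_{\sigma_Z}(Z_j(X)))$ (so each $V_j(X)\sim\mathrm{Beta}(1,M)$), and define by stick-breaking $p_1(X)=V_1(X)$, $p_j(X)=V_j(X)\prod_{l<j}(1-V_l(X))$ for $j>1$. *)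

theory Defs
  imports "HOL-Probability.Probability"
begin

definition gauss_law :: "real \<Rightarrow> real measure" where
  "gauss_law v = (if v = 0 then return borel 0
                  else density lborel (\<lambda>t. ennreal (normal_density 0 (sqrt v) t)))"

definition centered_gaussian_process ::
  "'a measure \<Rightarrow> real set \<Rightarrow> (real \<Rightarrow> real \<Rightarrow> real) \<Rightarrow> (real \<Rightarrow> 'a \<Rightarrow> real) \<Rightarrow> bool" where
  "centered_gaussian_process P S C Z \<longleftrightarrow>
     (\<forall>x\<in>S. Z x \<in> borel_measurable P) \<and>
     (\<forall>(xs::real list) (cs::real list). length cs = length xs \<and> set xs \<subseteq> S \<longrightarrow>
        distr P borel (\<lambda>\<omega>. \<Sum>i<length xs. cs ! i * Z (xs ! i) \<omega>) =
        gauss_law (\<Sum>i<length xs. \<Sum>k<length xs. cs ! i * cs ! k * C (xs ! i) (xs ! k)))"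

definition Phi :: "real \<Rightarrow> real \<Rightarrow> real" where
  "Phi \<sigma> t = measure (density lborel (\<lambda>s. ennreal (normal_density 0 \<sigma> s))) {..t}"

definition Beta_inv_cdf :: "real \<Rightarrow> real \<Rightarrow> real" where
  "Beta_inv_cdf M u = 1 - (1 - u) powr (1 / M)"

text \<open>Stick-breaking weights, indices shifted to start at 0:
  stick V 0 = V 0, stick V j = V j * prod_{l<j} (1 - V l).\<close>
definition stick :: "(nat \<Rightarrow> real) \<Rightarrow> nat \<Rightarrow> real" where
  "stick V j = V j * (\<Prod>l<j. 1 - V l)"

definition simpson :: "(nat \<Rightarrow> real) \<Rightarrow> real" where
  "simpson p = 1 - (\<Sum>j. (p j)\<^sup>2)"

end

theory Submission
  imports Defs
begin


definition trig1 :: "(real \<Rightarrow> real) \<Rightarrow> bool" where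
  "trig1 f \<longleftrightarrow> (\<exists>ws::(real\<times>real\<times>real) list. \<forall>x. f x = (\<Sum>(w,m,c)\<leftarrow>ws. w * cos (m*x + c)))"

definition trig2 :: "(real \<Rightarrow> real \<Rightarrow> real) \<Rightarrow> bool" where
  "trig2 f \<longleftrightarrow> (\<exists>ws::(real\<times>real\<times>real\<times>real) list. \<forall>x y. f x y = (\<Sum>(w,a,b,c)\<leftarrow>ws. w * cos (a*x + b*y + c)))"

lemma sum_list_prod_aux: "(\<Sum>a\<leftarrow>xs. f a) * (\<Sum>b\<leftarrow>ys. g b) = (\<Sum>a\<leftarrow>xs. \<Sum>b\<leftarrow>ys. f a * g b :: real)"
  by (induct xs) (auto simp: distrib_right sum_list_const_mult)

lemma sum_list_concat: "sum_list (concat xss) = sum_list (map sum_list xss :: real list)"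
  by (induct xss) auto

lemma trig1_const: "trig1 (\<lambda>x. c)"
  unfolding trig1_def by (rule exI[of _ "[(c,0,0)]"]) simp

lemma trig1_add: "trig1 f \<Longrightarrow> trig1 g \<Longrightarrow> trig1 (\<lambda>x. f x + g x)"
  unfolding trig1_def
proof (elim exE)
  fix ws vs :: "(real\<times>real\<times>real) list"
  assume F: "\<forall>x. f x = (\<Sum>(w,m,c)\<leftarrow>ws. w * cos (m*x + c))"
    and G: "\<forall>x. g x = (\<Sum>(w,m,c)\<leftarrow>vs. w * cos (m*x + c))"
  show "\<exists>ws. \<forall>x. f x + g x = (\<Sum>(w,m,c)\<leftarrow>ws. w * cos (m*x + c))"
    by (rule exI[of _ "ws @ vs"]) (simp add: F G)
qed

lemma trig1_scale: "trig1 f \<Longrightarrow> trig1 (\<lambda>x. f (\<alpha> * x))"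
  unfolding trig1_def
proof (elim exE)
  fix ws :: "(real\<times>real\<times>real) list" assume H: "\<forall>x. f x = (\<Sum>(w,m,c)\<leftarrow>ws. w * cos (m*x + c))"
  show "\<exists>ws. \<forall>x. f (\<alpha> * x) = (\<Sum>(w,m,c)\<leftarrow>ws. w * cos (m*x + c))"
    apply (rule exI[of _ "map (\<lambda>(w,m,c). (w, m*\<alpha>, c)) ws"])
    apply (simp add: H o_def split_def mult.assoc)
    done
qed

lemma sum_list_concat_map: "(\<Sum>x\<leftarrow>concat (map f xs). g x) = (\<Sum>a\<leftarrow>xs. \<Sum>x\<leftarrow>f a. g x :: real)"
  by (induct xs) auto


lemma aux_mul: "(P::real) * Q = (R + S)/2 \<Longrightarrow> (w * P) * (w' * Q) = w*w'/2 * R + (w*w'/2 * S + 0)"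
proof -
  assume h: "P * Q = (R + S)/2"
  have "(w * P) * (w' * Q) = w*w'*(P*Q)" by (simp add: ac_simps)
  also have "\<dots> = w*w'/2 * R + (w*w'/2 * S + 0)" unfolding h by (simp add: algebra_simps)
  finally show ?thesis .
qed

definition pm1 :: "real\<times>real\<times>real \<Rightarrow> real\<times>real\<times>real \<Rightarrow> (real\<times>real\<times>real) list" where
  "pm1 a b = (case a of (w,m,c) \<Rightarrow> case b of (w',m',c') \<Rightarrow> [(w*w'/2, m-m', c-c'), (w*w'/2, m+m', c+c')])"

definition ev1 :: "real \<Rightarrow> real\<times>real\<times>real \<Rightarrow> real" where
  "ev1 x t = (case t of (w,m,c) \<Rightarrow> w * cos (m*x + c))"

lemma pm1_ev: "ev1 x a * ev1 x b = (\<Sum>t\<leftarrow>pm1 a b. ev1 x t)"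
proof -
  obtain w m c where a: "a = (w,m,c)" by (cases a) auto
  obtain w' m' c' where b: "b = (w',m',c')" by (cases b) auto
  have "cos (m*x+c) * cos (m'*x+c') = (cos ((m*x+c)-(m'*x+c')) + cos ((m*x+c)+(m'*x+c')))/2"
    by (rule cos_times_cos)
  also have "(m*x+c)-(m'*x+c') = (m-m')*x + (c-c')" by (simp add: algebra_simps)
  also have "(m*x+c)+(m'*x+c') = (m+m')*x + (c+c')" by (simp add: algebra_simps)
  finally have "cos (m*x+c) * cos (m'*x+c') = (cos ((m-m')*x + (c-c')) + cos ((m+m')*x + (c+c')))/2" .
  then show ?thesis unfolding a b pm1_def ev1_def
    by (simp only: prod.case list.map sum_list_simps) (rule aux_mul)
qed

lemma trig1_ev: "trig1 f \<longleftrightarrow> (\<exists>ws. \<forall>x. f x = (\<Sum>t\<leftarrow>ws. ev1 x t))"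
  unfolding trig1_def ev1_def by (simp add: split_def)

lemma trig1_mult: "trig1 f \<Longrightarrow> trig1 g \<Longrightarrow> trig1 (\<lambda>x. f x * g x)"
  unfolding trig1_ev
proof (elim exE)
  fix ws vs
  assume F: "\<forall>x. f x = (\<Sum>t\<leftarrow>ws. ev1 x t)" and G: "\<forall>x. g x = (\<Sum>t\<leftarrow>vs. ev1 x t)"
  let ?L = "concat (map (\<lambda>a. concat (map (\<lambda>b. pm1 a b) vs)) ws)"
  have "f x * g x = (\<Sum>t\<leftarrow>?L. ev1 x t)" for x
  proof -
    have "f x * g x = (\<Sum>a\<leftarrow>ws. \<Sum>b\<leftarrow>vs. ev1 x a * ev1 x b)"
      unfolding F[rule_format] G[rule_format] by (rule sum_list_prod_aux)
    also have "\<dots> = (\<Sum>a\<leftarrow>ws. \<Sum>b\<leftarrow>vs. \<Sum>t\<leftarrow>pm1 a b. ev1 x t)"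
      by (simp only: pm1_ev)
    also have "\<dots> = (\<Sum>t\<leftarrow>?L. ev1 x t)"
      by (simp only: sum_list_concat_map)
    finally show ?thesis .
  qed
  then show "\<exists>ws. \<forall>x. f x * g x = (\<Sum>t\<leftarrow>ws. ev1 x t)" by blast
qed

lemma bl_complex: "bounded_linear (p :: complex \<Rightarrow> real) \<Longrightarrow> p z = Re z * p 1 + Im z * p \<i>"
proof -
  assume "bounded_linear p"
  then interpret bounded_linear p .
  have "z = Re z *\<^sub>R 1 + Im z *\<^sub>R \<i>" by (simp add: complex_eq_iff)
  then have "p z = p (Re z *\<^sub>R 1 + Im z *\<^sub>R \<i>)" by simp
  also have "\<dots> = Re z * p 1 + Im z * p \<i>" by (simp add: add scale)
  finally show ?thesis .
qed

lemma trig1_poly: "real_polynomial_function (p :: complex \<Rightarrow> real) \<Longrightarrow> trig1 (\<lambda>x. p (cis x))"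
proof (induct rule: real_polynomial_function.induct)
  case (linear f)
  show ?case unfolding trig1_def
    apply (rule exI[of _ "[(f 1, 1, 0), (f \<i>, 1, - pi/2)]"])
  proof
    fix x
    have "f (cis x) = cos x * f 1 + sin x * f \<i>" using bl_complex[OF linear, of "cis x"] by simp
    then show "f (cis x) = (\<Sum>(w,m,c)\<leftarrow>[(f 1, 1, 0), (f \<i>, 1, - pi/2)]. w * cos (m*x + c))"
      by (simp add: cos_diff)
  qed
next
  case (const c) show ?case by (rule trig1_const)
next
  case (add f g) show ?case by (rule trig1_add[OF add(2) add(4)])
next
  case (mult f g) show ?case by (rule trig1_mult[OF mult(2) mult(4)])
qed

definition pm2 :: "real\<times>real\<times>real \<Rightarrow> real\<times>real\<times>real \<Rightarrow> (real\<times>real\<times>real\<times>real) list" where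
  "pm2 a b = (case a of (w,m,c) \<Rightarrow> case b of (w',m',c') \<Rightarrow> [(w*w'/2, m, -m', c-c'), (w*w'/2, m, m', c+c')])"

definition ev2 :: "real \<Rightarrow> real \<Rightarrow> real\<times>real\<times>real\<times>real \<Rightarrow> real" where
  "ev2 x y t = (case t of (w,a,b,c) \<Rightarrow> w * cos (a*x + b*y + c))"

lemma pm2_ev: "ev1 x a * ev1 y b = (\<Sum>t\<leftarrow>pm2 a b. ev2 x y t)"
proof -
  obtain w m c where a: "a = (w,m,c)" by (cases a) auto
  obtain w' m' c' where b: "b = (w',m',c')" by (cases b) auto
  have "cos (m*x+c) * cos (m'*y+c') = (cos ((m*x+c)-(m'*y+c')) + cos ((m*x+c)+(m'*y+c')))/2"
    by (rule cos_times_cos)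
  also have "(m*x+c)-(m'*y+c') = m*x + -m'*y + (c-c')" by (simp add: algebra_simps)
  also have "(m*x+c)+(m'*y+c') = m*x + m'*y + (c+c')" by (simp add: algebra_simps)
  finally have "cos (m*x+c) * cos (m'*y+c') = (cos (m*x + -m'*y + (c-c')) + cos (m*x + m'*y + (c+c')))/2" .
  then show ?thesis unfolding a b pm2_def ev1_def ev2_def
    by (simp only: prod.case list.map sum_list_simps) (rule aux_mul)
qed

lemma trig2_ev: "trig2 f \<longleftrightarrow> (\<exists>ws. \<forall>x y. f x y = (\<Sum>t\<leftarrow>ws. ev2 x y t))"
  unfolding trig2_def ev2_def by (simp add: split_def)

lemma trig2_prod: "trig1 f \<Longrightarrow> trig1 g \<Longrightarrow> trig2 (\<lambda>x y. f x * g y)"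
  unfolding trig1_ev trig2_ev
proof (elim exE)
  fix ws vs
  assume F: "\<forall>x. f x = (\<Sum>t\<leftarrow>ws. ev1 x t)" and G: "\<forall>x. g x = (\<Sum>t\<leftarrow>vs. ev1 x t)"
  let ?L = "concat (map (\<lambda>a. concat (map (\<lambda>b. pm2 a b) vs)) ws)"
  have "f x * g y = (\<Sum>t\<leftarrow>?L. ev2 x y t)" for x y
  proof -
    have "f x * g y = (\<Sum>a\<leftarrow>ws. \<Sum>b\<leftarrow>vs. ev1 x a * ev1 y b)"
      unfolding F[rule_format] G[rule_format] by (rule sum_list_prod_aux)
    also have "\<dots> = (\<Sum>a\<leftarrow>ws. \<Sum>b\<leftarrow>vs. \<Sum>t\<leftarrow>pm2 a b. ev2 x y t)"
      by (simp only: pm2_ev)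
    also have "\<dots> = (\<Sum>t\<leftarrow>?L. ev2 x y t)"
      by (simp only: sum_list_concat_map)
    finally show ?thesis .
  qed
  then show "\<exists>ws. \<forall>x y. f x * g y = (\<Sum>t\<leftarrow>ws. ev2 x y t)" by blast
qed



lemma sum_list_as_sum: "(\<Sum>t\<leftarrow>ws. F t) = (\<Sum>i<length ws. F (ws ! i) :: real)"
  by (simp add: sum_list_sum_nth atLeast0LessThan)

lemma small_zero:
  fixes d K :: real
  assumes "\<And>e. 0 < e \<Longrightarrow> e \<le> 1 \<Longrightarrow> \<bar>d\<bar> \<le> K * e" "K \<ge> 0"
  shows "d = 0"
proof (rule ccontr)
  assume "d \<noteq> 0"
  define e where "e = min 1 (\<bar>d\<bar> / (2*(K+1)))"
  have e: "0 < e" "e \<le> 1" using \<open>d \<noteq> 0\<close> assms(2) by (auto simp: e_def)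
  have "K * e \<le> (K+1) * e" using e by (simp add: mult_right_mono)
  also have "\<dots> \<le> (K+1) * (\<bar>d\<bar> / (2*(K+1)))" using assms(2) by (intro mult_left_mono) (auto simp: e_def)
  also have "\<dots> = \<bar>d\<bar>/2" using assms(2) by (simp add: field_simps)
  also have "\<dots> < \<bar>d\<bar>" using \<open>d \<noteq> 0\<close> by simp
  finally show False using assms(1)[OF e] by simp
qed

context prob_space
begin

lemma trig2_expect:
  fixes X1 X2 Y1 Y2 :: "'a \<Rightarrow> real"
  assumes [measurable]: "X1 \<in> borel_measurable M" "X2 \<in> borel_measurable M"
      "Y1 \<in> borel_measurable M" "Y2 \<in> borel_measurable M"
    and law: "\<And>a b. distr M borel (\<lambda>\<omega>. a * X1 \<omega> + b * X2 \<omega>) = distr M borel (\<lambda>\<omega>. a * Y1 \<omega> + b * Y2 \<omega>)"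
    and tr: "trig2 \<phi>"
  shows "(\<integral>\<omega>. \<phi> (X1 \<omega>) (X2 \<omega>) \<partial>M) = (\<integral>\<omega>. \<phi> (Y1 \<omega>) (Y2 \<omega>) \<partial>M)"
proof -
  obtain ws where ws: "\<And>x y. \<phi> x y = (\<Sum>t\<leftarrow>ws. ev2 x y t)" using tr unfolding trig2_ev by blast
  have one: "(\<integral>\<omega>. ev2 (U1 \<omega>) (U2 \<omega>) t \<partial>M) = fst t * (\<integral>s. cos (s + snd (snd (snd t))) \<partial>distr M borel (\<lambda>\<omega>. fst (snd t) * U1 \<omega> + fst (snd (snd t)) * U2 \<omega>))"
    if [measurable]: "U1 \<in> borel_measurable M" "U2 \<in> borel_measurable M" for U1 U2 t
  proof -
    obtain w a b c where t: "t = (w,a,b,c)" by (cases t) auto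
    have "(\<integral>s. cos (s + c) \<partial>distr M borel (\<lambda>\<omega>. a * U1 \<omega> + b * U2 \<omega>)) = (\<integral>\<omega>. cos (a * U1 \<omega> + b * U2 \<omega> + c) \<partial>M)"
      by (subst integral_distr) auto
    then show ?thesis unfolding t ev2_def by simp
  qed
  have int: "integrable M (\<lambda>\<omega>. ev2 (U1 \<omega>) (U2 \<omega>) t)"
    if [measurable]: "U1 \<in> borel_measurable M" "U2 \<in> borel_measurable M" for U1 U2 t
  proof -
    obtain w a b c where t: "t = (w,a,b,c)" by (cases t) auto
    show ?thesis unfolding t ev2_def
      by (rule integrable_const_bound[where B="\<bar>w\<bar>"]) (auto simp: abs_mult intro!: mult_left_le)
  qed
  have gen: "(\<integral>\<omega>. \<phi> (U1 \<omega>) (U2 \<omega>) \<partial>M) = (\<Sum>i<length ws. \<integral>\<omega>. ev2 (U1 \<omega>) (U2 \<omega>) (ws!i) \<partial>M)"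
    if [measurable]: "U1 \<in> borel_measurable M" "U2 \<in> borel_measurable M" for U1 U2
    unfolding ws sum_list_as_sum
    by (rule Bochner_Integration.integral_sum) (rule int, auto)
  show ?thesis
    by (simp add: gen one law)
qed

lemma tail_small:
  fixes X :: "'a \<Rightarrow> real"
  assumes [measurable]: "X \<in> borel_measurable M" and e: "e > 0"
  obtains R where "R > 0" "prob {\<omega>\<in>space M. R < \<bar>X \<omega>\<bar>} < e"
proof -
  define A where "A n = {\<omega>\<in>space M. real n < \<bar>X \<omega>\<bar>}" for n :: nat
  have "range A \<subseteq> sets M" unfolding A_def by auto
  moreover have "decseq A" unfolding A_def decseq_def by auto
  ultimately have lim: "(\<lambda>n. prob (A n)) \<longlonglongrightarrow> prob (\<Inter>i. A i)" by (rule finite_Lim_measure_decseq)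
  have "(\<Inter>i. A i) = {}"
  proof (rule ccontr)
    assume "(\<Inter>i. A i) \<noteq> {}"
    then obtain \<omega> where h: "\<And>i. \<omega> \<in> A i" by blast
    obtain n :: nat where n: "\<bar>X \<omega>\<bar> < real n" using reals_Archimedean2 by blast
    from h[of n] have "real n < \<bar>X \<omega>\<bar>" unfolding A_def by simp
    with n show False by simp
  qed
  with lim have "(\<lambda>n. prob (A n)) \<longlonglongrightarrow> 0" by simp
  then have "eventually (\<lambda>n. prob (A n) < e) sequentially" using e by (rule order_tendstoD)
  then obtain n where n: "prob (A n) < e" by (auto simp: eventually_sequentially)
  have "prob {\<omega>\<in>space M. real n + 1 < \<bar>X \<omega>\<bar>} \<le> prob (A n)"
    unfolding A_def by (rule finite_measure_mono) auto
  with n have "prob {\<omega>\<in>space M. real n + 1 < \<bar>X \<omega>\<bar>} < e" by simp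
  moreover have "real n + 1 > 0" by simp
  ultimately show ?thesis using that by blast
qed

lemma approx_err:
  fixes X1 X2 :: "'a \<Rightarrow> real" and f g p q :: "real \<Rightarrow> real"
  assumes [measurable]: "X1 \<in> borel_measurable M" "X2 \<in> borel_measurable M"
      "f \<in> borel_measurable borel" "g \<in> borel_measurable borel" "p \<in> borel_measurable borel" "q \<in> borel_measurable borel"
    and bf: "\<And>x. \<bar>f x\<bar> \<le> B" and bg: "\<And>x. \<bar>g x\<bar> \<le> B"
    and bp: "\<And>x. \<bar>p x\<bar> \<le> B + 1" and bq: "\<And>x. \<bar>q x\<bar> \<le> B + 1"
    and d: "0 \<le> d"
    and af: "\<And>x. \<bar>x\<bar> \<le> R \<Longrightarrow> \<bar>f x - p x\<bar> \<le> d" and ag: "\<And>x. \<bar>x\<bar> \<le> R \<Longrightarrow> \<bar>g x - q x\<bar> \<le> d"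
  shows "\<bar>(\<integral>\<omega>. f (X1 \<omega>) * g (X2 \<omega>) \<partial>M) - (\<integral>\<omega>. p (X1 \<omega>) * q (X2 \<omega>) \<partial>M)\<bar>
     \<le> d * (2*B+1) + 2*(B+1)^2 * (prob {\<omega>\<in>space M. R < \<bar>X1 \<omega>\<bar>} + prob {\<omega>\<in>space M. R < \<bar>X2 \<omega>\<bar>})"
proof -
  have B0: "0 \<le> B" using bf[of 0] by simp
  have B1: "0 \<le> B + 1" using B0 by simp
  define E1 where "E1 = {\<omega>\<in>space M. R < \<bar>X1 \<omega>\<bar>}"
  define E2 where "E2 = {\<omega>\<in>space M. R < \<bar>X2 \<omega>\<bar>}"
  have [measurable]: "E1 \<in> sets M" "E2 \<in> sets M" unfolding E1_def E2_def by auto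
  define K where "K = 2*(B+1)^2"
  have K0: "0 \<le> K" unfolding K_def by simp
  have i1: "integrable M (\<lambda>\<omega>. f (X1 \<omega>) * g (X2 \<omega>))"
    by (rule integrable_const_bound[where B="B*B"]) (auto simp: abs_mult intro!: mult_mono bf bg B0)
  have i2: "integrable M (\<lambda>\<omega>. p (X1 \<omega>) * q (X2 \<omega>))"
    by (rule integrable_const_bound[where B="(B+1)*(B+1)"]) (auto simp: abs_mult intro!: mult_mono bp bq B1)
  have pw: "\<bar>f (X1 \<omega>) * g (X2 \<omega>) - p (X1 \<omega>) * q (X2 \<omega>)\<bar> \<le> d * (2*B+1) + K * (indicator E1 \<omega> + indicator E2 \<omega>)"
    if \<omega>: "\<omega> \<in> space M" for \<omega>
  proof -
    let ?a = "f (X1 \<omega>)" and ?b = "g (X2 \<omega>)" and ?c = "p (X1 \<omega>)" and ?e = "q (X2 \<omega>)"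
    have split: "?a * ?b - ?c * ?e = (?a - ?c) * ?b + ?c * (?b - ?e)" by (simp add: algebra_simps)
    have ind0: "0 \<le> indicator E1 \<omega> + (indicator E2 \<omega> :: real)" by simp
    show ?thesis
    proof (cases "\<omega> \<in> E1 \<or> \<omega> \<in> E2")
      case True
      then have "1 \<le> indicator E1 \<omega> + (indicator E2 \<omega> :: real)" by (auto simp: indicator_def)
      then have "K \<le> K * (indicator E1 \<omega> + indicator E2 \<omega>)" using K0 by (metis mult_left_mono mult.right_neutral)
      moreover have "\<bar>?a * ?b - ?c * ?e\<bar> \<le> B*B + (B+1)*(B+1)"
      proof -
        have "\<bar>?a * ?b - ?c * ?e\<bar> \<le> \<bar>?a\<bar> * \<bar>?b\<bar> + \<bar>?c\<bar> * \<bar>?e\<bar>" by (simp add: abs_mult[symmetric] abs_triangle_ineq4)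
        also have "\<dots> \<le> B*B + (B+1)*(B+1)" by (intro add_mono mult_mono bf bg bp bq) (auto simp: B0 B1)
        finally show ?thesis .
      qed
      moreover have "B*B + (B+1)*(B+1) \<le> K" using B0 unfolding K_def by (simp add: power2_eq_square algebra_simps)
      moreover have "0 \<le> d * (2*B+1)" using d B0 by (intro mult_nonneg_nonneg; linarith)
      ultimately show ?thesis by linarith
    next
      case False
      then have r: "\<bar>X1 \<omega>\<bar> \<le> R" "\<bar>X2 \<omega>\<bar> \<le> R" using \<omega> unfolding E1_def E2_def by auto
      have "\<bar>?a * ?b - ?c * ?e\<bar> \<le> \<bar>?a - ?c\<bar> * \<bar>?b\<bar> + \<bar>?c\<bar> * \<bar>?b - ?e\<bar>"
        unfolding split by (simp add: abs_mult[symmetric] abs_triangle_ineq)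
      also have "\<dots> \<le> d * B + (B+1) * d" by (intro add_mono mult_mono af ag bg bp r) (auto simp: d B0 B1)
      also have "\<dots> = d * (2*B+1)" by (simp add: algebra_simps)
      finally show ?thesis using K0 ind0 by (simp add: mult_nonneg_nonneg add_increasing2)
    qed
  qed
  have "\<bar>(\<integral>\<omega>. f (X1 \<omega>) * g (X2 \<omega>) \<partial>M) - (\<integral>\<omega>. p (X1 \<omega>) * q (X2 \<omega>) \<partial>M)\<bar>
       = \<bar>\<integral>\<omega>. f (X1 \<omega>) * g (X2 \<omega>) - p (X1 \<omega>) * q (X2 \<omega>) \<partial>M\<bar>"
    using i1 i2 by simp
  also have "\<dots> \<le> (\<integral>\<omega>. \<bar>f (X1 \<omega>) * g (X2 \<omega>) - p (X1 \<omega>) * q (X2 \<omega>)\<bar> \<partial>M)"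
    by (rule integral_abs_bound)
  also have "\<dots> \<le> (\<integral>\<omega>. d * (2*B+1) + K * (indicator E1 \<omega> + indicator E2 \<omega>) \<partial>M)"
    by (rule integral_mono) (use i1 i2 pw in \<open>auto intro!: Bochner_Integration.integrable_add integrable_mult_right integrable_real_indicator simp: emeasure_eq_measure\<close>)
  also have "\<dots> = d * (2*B+1) + K * (prob E1 + prob E2)"
  proof -
    have ii: "integrable M (indicator E1 :: 'a \<Rightarrow> real)" "integrable M (indicator E2 :: 'a \<Rightarrow> real)"
      by (auto intro!: integrable_real_indicator simp: emeasure_eq_measure)
    have "(\<integral>\<omega>. d * (2*B+1) + K * (indicator E1 \<omega> + indicator E2 \<omega>) \<partial>M)
        = (\<integral>\<omega>. d * (2*B+1) \<partial>M) + (\<integral>\<omega>. K * (indicator E1 \<omega> + indicator E2 \<omega>) \<partial>M)"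
      using ii by (intro Bochner_Integration.integral_add) auto
    also have "(\<integral>\<omega>. K * (indicator E1 \<omega> + indicator E2 \<omega>) \<partial>M) = K * ((\<integral>\<omega>. indicator E1 \<omega> \<partial>M) + (\<integral>\<omega>. indicator E2 \<omega> \<partial>M))"
      using ii by (simp add: Bochner_Integration.integral_add)
    also have "(\<integral>\<omega>. indicator E1 \<omega> \<partial>M) = prob E1" using sets.sets_into_space[OF \<open>E1 \<in> events\<close>] by (simp add: Int_absorb2)
    also have "(\<integral>\<omega>. indicator E2 \<omega> \<partial>M) = prob E2" using sets.sets_into_space[OF \<open>E2 \<in> events\<close>] by (simp add: Int_absorb2)
    finally show ?thesis by (simp add: prob_space)
  qed
  finally show ?thesis unfolding K_def E1_def E2_def .
qed

end



lemma trig_approx: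
  fixes f :: "real \<Rightarrow> real"
  assumes cont: "continuous_on UNIV f" and bnd: "\<And>x. \<bar>f x\<bar> \<le> B" and R: "R > 0" and e: "e > 0"
  obtains p where "trig1 p" "continuous_on UNIV p" "\<And>x. \<bar>x\<bar> \<le> R \<Longrightarrow> \<bar>f x - p x\<bar> < e" "\<And>x. \<bar>p x\<bar> \<le> B + e"
proof -
  define \<alpha> where "\<alpha> = pi / (R+2)"
  have \<alpha>0: "\<alpha> > 0" using R by (simp add: \<alpha>_def)
  define chi where "chi x = max 0 (min 1 (R + 1 - \<bar>x\<bar>))" for x :: real
  define ft where "ft x = f x * chi x" for x
  define G where "G u = ft (Arg u / \<alpha>)" for u :: complex
  let ?S = "sphere (0::complex) 1"
  have chic: "continuous_on UNIV chi" unfolding chi_def by (intro continuous_intros)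
  have ftc: "continuous_on UNIV ft" unfolding ft_def using cont chic by (intro continuous_intros) auto
  have ftb: "\<bar>ft x\<bar> \<le> B" for x
  proof -
    have "0 \<le> chi x" "chi x \<le> 1" unfolding chi_def by auto
    then have "\<bar>ft x\<bar> \<le> \<bar>f x\<bar> * 1" unfolding ft_def abs_mult by (intro mult_left_mono) auto
    with bnd[of x] show ?thesis by simp
  qed
  have \<alpha>R: "\<alpha> * (R+1) < pi" using R by (simp add: \<alpha>_def field_simps)
  define c where "c = cos (\<alpha> * (R+1))"
  have Gz: "G z = 0" if z: "norm z = 1" "Re z < c" for z
  proof -
    have "z \<noteq> 0" using z by auto
    then have "z = of_real (norm z) * exp (\<i> * Arg z)" by (rule Arg_eq)
    with z have "z = cis (Arg z)" by (simp add: cis_conv_exp)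
    then have "Re z = Re (cis (Arg z))" by simp
    then have "Re z = cos (Arg z)" by simp
    have "\<alpha> * (R+1) < \<bar>Arg z\<bar>"
    proof (rule ccontr)
      assume "\<not> \<alpha> * (R+1) < \<bar>Arg z\<bar>"
      then have "cos (\<alpha> * (R+1)) \<le> cos \<bar>Arg z\<bar>" using \<alpha>R \<alpha>0 R
        by (intro cos_monotone_0_pi_le) auto
      then show False using z \<open>Re z = cos (Arg z)\<close> unfolding c_def by simp
    qed
    then have "R + 1 < \<bar>Arg z / \<alpha>\<bar>" using \<alpha>0 by (simp add: field_simps abs_div)
    then have "chi (Arg z / \<alpha>) = 0" unfolding chi_def by simp
    then show ?thesis unfolding G_def ft_def by simp
  qed
  have Gc: "continuous_on ?S G"
  proof (rule continuous_on_eq_continuous_within[THEN iffD2], intro ballI)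
    fix u assume u: "u \<in> ?S"
    show "continuous (at u within ?S) G"
    proof (cases "Re u < c")
      case True
      have G0: "G u = 0" using Gz u True by simp
      have ev: "eventually (\<lambda>z. G z = G u) (at u within ?S)"
        unfolding eventually_at_topological
        by (rule exI[of _ "{z. Re z < c}"]) (use True G0 Gz in \<open>auto intro: open_halfspace_Re_lt\<close>)
      show ?thesis unfolding continuous_within
        by (rule Lim_transform_eventually[OF tendsto_const]) (use ev in \<open>auto elim: eventually_mono\<close>)
    next
      case False
      have "c > -1"
      proof -
        have "cos pi < cos (\<alpha> * (R+1))" using \<alpha>R \<alpha>0 R by (intro cos_monotone_0_pi) auto
        then show ?thesis unfolding c_def by simp
      qed
      with False have "u \<notin> \<real>\<^sub>\<le>\<^sub>0" using u by (auto simp: complex_nonpos_Reals_iff cmod_def power2_eq_1_iff)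
      then have "continuous (at u) Arg" by (rule continuous_at_Arg)
      then have "continuous (at u) (\<lambda>u. Arg u / \<alpha>)" using \<alpha>0 by (intro continuous_intros) auto
      moreover have "isCont ft (Arg u / \<alpha>)" using ftc by (simp add: continuous_on_eq_continuous_at)
      ultimately have "continuous (at u) G" unfolding G_def by (rule isCont_o2)
      then show ?thesis by (rule continuous_at_imp_continuous_within)
    qed
  qed
  obtain g where g: "real_polynomial_function g" "\<And>u. u \<in> ?S \<Longrightarrow> \<bar>G u - g u\<bar> < e"
    using Stone_Weierstrass_real_polynomial_function[OF compact_sphere Gc e] by blast
  define p where "p x = g (cis (\<alpha> * x))" for x
  have "trig1 p" unfolding p_def by (rule trig1_scale[OF trig1_poly[OF g(1)]])
  moreover have "continuous_on UNIV p"
  proof -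
    have gc: "continuous_on UNIV g" using continuous_real_polymonial_function[OF g(1)]
      by (simp add: continuous_at_imp_continuous_on)
    have cc: "continuous_on UNIV (\<lambda>x. cis (\<alpha> * x))" by (intro continuous_intros)
    show ?thesis unfolding p_def by (rule continuous_on_compose2[OF gc cc]) auto
  qed
  moreover have "\<bar>f x - p x\<bar> < e" if x: "\<bar>x\<bar> \<le> R" for x
  proof -
    have "\<bar>\<alpha> * x\<bar> \<le> \<alpha> * R" using x \<alpha>0 by (simp add: abs_mult)
    also have "\<alpha> * R < pi"
    proof -
      have "\<alpha> * R < \<alpha> * (R+1)" using \<alpha>0 by simp
      with \<alpha>R show ?thesis by linarith
    qed
    finally have "Arg (cis (\<alpha> * x)) = \<alpha> * x" by (intro Arg_cis) auto
    then have "G (cis (\<alpha> * x)) = ft x" unfolding G_def using \<alpha>0 by simp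
    also have "ft x = f x" unfolding ft_def chi_def using x by simp
    finally show ?thesis using g(2)[of "cis (\<alpha> * x)"] unfolding p_def by simp
  qed
  moreover have "\<bar>p x\<bar> \<le> B + e" for x
  proof -
    have "\<bar>G (cis (\<alpha> * x)) - p x\<bar> < e" using g(2)[of "cis (\<alpha> * x)"] unfolding p_def by simp
    moreover have "\<bar>G (cis (\<alpha> * x))\<bar> \<le> B" unfolding G_def by (rule ftb)
    ultimately show ?thesis by linarith
  qed
  ultimately show ?thesis using that by blast
qed

context prob_space
begin

lemma CW:
  fixes X1 X2 Y1 Y2 :: "'a \<Rightarrow> real" and f g :: "real \<Rightarrow> real"
  assumes [measurable]: "X1 \<in> borel_measurable M" "X2 \<in> borel_measurable M"
      "Y1 \<in> borel_measurable M" "Y2 \<in> borel_measurable M"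
    and law: "\<And>a b. distr M borel (\<lambda>\<omega>. a * X1 \<omega> + b * X2 \<omega>) = distr M borel (\<lambda>\<omega>. a * Y1 \<omega> + b * Y2 \<omega>)"
    and cf: "continuous_on UNIV f" and cg: "continuous_on UNIV g"
    and bf: "\<And>x. \<bar>f x\<bar> \<le> B" and bg: "\<And>x. \<bar>g x\<bar> \<le> B"
  shows "(\<integral>\<omega>. f (X1 \<omega>) * g (X2 \<omega>) \<partial>M) = (\<integral>\<omega>. f (Y1 \<omega>) * g (Y2 \<omega>) \<partial>M)"
proof -
  have B0: "0 \<le> B" using bf[of 0] by simp
  have [measurable]: "f \<in> borel_measurable borel" "g \<in> borel_measurable borel"
    using cf cg by (auto intro: borel_measurable_continuous_onI)
  define K where "K = (2*B+1) + 8*(B+1)^2"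
  have main: "\<bar>(\<integral>\<omega>. f (X1 \<omega>) * g (X2 \<omega>) \<partial>M) - (\<integral>\<omega>. f (Y1 \<omega>) * g (Y2 \<omega>) \<partial>M)\<bar> \<le> K * e"
    if e: "0 < e" "e \<le> 1" for e
  proof -
    obtain R1 where R1: "R1 > 0" "prob {\<omega>\<in>space M. R1 < \<bar>X1 \<omega>\<bar>} < e" using tail_small[of X1 e] e by auto
    obtain R2 where R2: "R2 > 0" "prob {\<omega>\<in>space M. R2 < \<bar>X2 \<omega>\<bar>} < e" using tail_small[of X2 e] e by auto
    obtain R3 where R3: "R3 > 0" "prob {\<omega>\<in>space M. R3 < \<bar>Y1 \<omega>\<bar>} < e" using tail_small[of Y1 e] e by auto
    obtain R4 where R4: "R4 > 0" "prob {\<omega>\<in>space M. R4 < \<bar>Y2 \<omega>\<bar>} < e" using tail_small[of Y2 e] e by auto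
    define R where "R = max (max R1 R2) (max R3 R4)"
    have R0: "R > 0" using R1 unfolding R_def by auto
    have Rle: "R1 \<le> R" "R2 \<le> R" "R3 \<le> R" "R4 \<le> R" unfolding R_def by auto
    have tl: "prob {\<omega>\<in>space M. R < \<bar>U \<omega>\<bar>} \<le> prob {\<omega>\<in>space M. Ri < \<bar>U \<omega>\<bar>}"
      if "Ri \<le> R" "U \<in> borel_measurable M" for U :: "'a \<Rightarrow> real" and Ri
      using that by (intro finite_measure_mono) auto
    have t1: "prob {\<omega>\<in>space M. R < \<bar>X1 \<omega>\<bar>} < e" using tl[OF Rle(1), of X1] R1(2) by auto
    have t2: "prob {\<omega>\<in>space M. R < \<bar>X2 \<omega>\<bar>} < e" using tl[OF Rle(2), of X2] R2(2) by auto
    have t3: "prob {\<omega>\<in>space M. R < \<bar>Y1 \<omega>\<bar>} < e" using tl[OF Rle(3), of Y1] R3(2) by auto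
    have t4: "prob {\<omega>\<in>space M. R < \<bar>Y2 \<omega>\<bar>} < e" using tl[OF Rle(4), of Y2] R4(2) by auto
    have e2: "e/2 > 0" using e by simp
    obtain p where p: "trig1 p" "continuous_on UNIV p" "\<And>x. \<bar>x\<bar> \<le> R \<Longrightarrow> \<bar>f x - p x\<bar> < e/2" "\<And>x. \<bar>p x\<bar> \<le> B + e/2"
      using trig_approx[OF cf bf R0 e2] by blast
    obtain q where q: "trig1 q" "continuous_on UNIV q" "\<And>x. \<bar>x\<bar> \<le> R \<Longrightarrow> \<bar>g x - q x\<bar> < e/2" "\<And>x. \<bar>q x\<bar> \<le> B + e/2"
      using trig_approx[OF cg bg R0 e2] by blast
    have [measurable]: "p \<in> borel_measurable borel" "q \<in> borel_measurable borel"
      using p(2) q(2) by (auto intro: borel_measurable_continuous_onI)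
    have bp: "\<bar>p x\<bar> \<le> B + 1" for x using p(4)[of x] e by linarith
    have bq: "\<bar>q x\<bar> \<le> B + 1" for x using q(4)[of x] e by linarith
    have ap: "\<bar>f x - p x\<bar> \<le> e/2" if "\<bar>x\<bar> \<le> R" for x using p(3)[OF that] by simp
    have aq: "\<bar>g x - q x\<bar> \<le> e/2" if "\<bar>x\<bar> \<le> R" for x using q(3)[OF that] by simp
    have eX: "\<bar>(\<integral>\<omega>. f (X1 \<omega>) * g (X2 \<omega>) \<partial>M) - (\<integral>\<omega>. p (X1 \<omega>) * q (X2 \<omega>) \<partial>M)\<bar>
     \<le> e/2 * (2*B+1) + 2*(B+1)^2 * (prob {\<omega>\<in>space M. R < \<bar>X1 \<omega>\<bar>} + prob {\<omega>\<in>space M. R < \<bar>X2 \<omega>\<bar>})"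
      by (rule approx_err) (use bf bg bp bq ap aq e in auto)
    have eY: "\<bar>(\<integral>\<omega>. f (Y1 \<omega>) * g (Y2 \<omega>) \<partial>M) - (\<integral>\<omega>. p (Y1 \<omega>) * q (Y2 \<omega>) \<partial>M)\<bar>
     \<le> e/2 * (2*B+1) + 2*(B+1)^2 * (prob {\<omega>\<in>space M. R < \<bar>Y1 \<omega>\<bar>} + prob {\<omega>\<in>space M. R < \<bar>Y2 \<omega>\<bar>})"
      by (rule approx_err) (use bf bg bp bq ap aq e in auto)
    have eq: "(\<integral>\<omega>. p (X1 \<omega>) * q (X2 \<omega>) \<partial>M) = (\<integral>\<omega>. p (Y1 \<omega>) * q (Y2 \<omega>) \<partial>M)"
      using trig2_expect[OF assms(1-4) law trig2_prod[OF p(1) q(1)]] by simp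
    have c0: "0 \<le> 2*(B+1)^2" by simp
    have "2*(B+1)^2 * (prob {\<omega>\<in>space M. R < \<bar>X1 \<omega>\<bar>} + prob {\<omega>\<in>space M. R < \<bar>X2 \<omega>\<bar>}) \<le> 2*(B+1)^2 * (2*e)"
      using t1 t2 by (intro mult_left_mono c0) auto
    moreover have "2*(B+1)^2 * (prob {\<omega>\<in>space M. R < \<bar>Y1 \<omega>\<bar>} + prob {\<omega>\<in>space M. R < \<bar>Y2 \<omega>\<bar>}) \<le> 2*(B+1)^2 * (2*e)"
      using t3 t4 by (intro mult_left_mono c0) auto
    ultimately have "\<bar>(\<integral>\<omega>. f (X1 \<omega>) * g (X2 \<omega>) \<partial>M) - (\<integral>\<omega>. f (Y1 \<omega>) * g (Y2 \<omega>) \<partial>M)\<bar>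
        \<le> e * (2*B+1) + 8*(B+1)^2 * e"
    proof -
      have h1: "e/2*(2*B+1) + e/2*(2*B+1) = e*(2*B+1)" by (simp add: field_simps)
      have h2: "2*(B+1)^2 * (2*e) + 2*(B+1)^2 * (2*e) = 8*(B+1)^2 * e" by (simp add: field_simps)
      show ?thesis using eX eY eq h1 h2 \<open>2*(B+1)^2 * (prob {\<omega>\<in>space M. R < \<bar>X1 \<omega>\<bar>} + prob {\<omega>\<in>space M. R < \<bar>X2 \<omega>\<bar>}) \<le> 2*(B+1)^2 * (2*e)\<close>
        \<open>2*(B+1)^2 * (prob {\<omega>\<in>space M. R < \<bar>Y1 \<omega>\<bar>} + prob {\<omega>\<in>space M. R < \<bar>Y2 \<omega>\<bar>}) \<le> 2*(B+1)^2 * (2*e)\<close>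
        by linarith
    qed
    also have "\<dots> = K * e" unfolding K_def by (simp add: algebra_simps)
    finally show ?thesis .
  qed
  have K0: "0 \<le> K" using B0 unfolding K_def by simp
  have "(\<integral>\<omega>. f (X1 \<omega>) * g (X2 \<omega>) \<partial>M) - (\<integral>\<omega>. f (Y1 \<omega>) * g (Y2 \<omega>) \<partial>M) = 0"
    by (rule small_zero[OF main K0])
  then show ?thesis by simp
qed

end



abbreviation "U01 \<equiv> uniform_measure lborel {0..1::real}"

lemma measure_lborel_Icc': "measure lborel {a..b::real} = (if a \<le> b then b - a else 0)"
  unfolding measure_def by (simp add: emeasure_lborel_Icc_eq)

lemma U01_real_distribution: "real_distribution U01"
  unfolding real_distribution_def real_distribution_axioms_def
  by (auto intro!: prob_space_uniform_measure simp: emeasure_lborel_Icc_eq)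

lemma cdf_U01: "cdf U01 u = (if u < 0 then 0 else if u \<le> 1 then u else 1)"
proof -
  have "cdf U01 u = measure lborel ({0..1} \<inter> {..u}) / measure lborel {0..1::real}"
    unfolding cdf_def by (subst measure_uniform_measure) (auto simp: emeasure_lborel_Icc_eq)
  also have "\<dots> = (if u < 0 then 0 else if u \<le> 1 then u else 1)"
  proof -
    consider "u < 0" | "0 \<le> u" "u \<le> 1" | "1 < u" by linarith
    then show ?thesis
    proof cases
      case 1
      then have "{0..1} \<inter> {..u} = ({}::real set)" by auto
      then show ?thesis using 1 by simp
    next
      case 2
      then have "{0..1} \<inter> {..u} = {0..u::real}" by auto
      then show ?thesis using 2 by (simp add: measure_lborel_Icc')
    next
      case 3
      then have "{0..1} \<inter> {..u} = {0..1::real}" by auto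
      then show ?thesis using 3 by (simp add: measure_lborel_Icc')
    qed
  qed
  finally show ?thesis .
qed

lemma PIT:
  assumes N: "real_distribution N" and cont: "\<And>x. isCont (cdf N) x"
  shows "distr N borel (cdf N) = U01"
proof -
  interpret N: real_distribution N by (rule N)
  let ?F = "cdf N"
  have mono: "mono ?F" by (auto intro: monoI N.cdf_nondecreasing)
  have Fb: "?F \<in> borel_measurable borel" by (rule borel_measurable_mono[OF mono])
  have Fm: "?F \<in> borel_measurable N"
    using Fb measurable_cong_sets[OF N.events_eq_borel refl, of borel] by blast
  have rd: "real_distribution (distr N borel ?F)" by (rule N.real_distribution_distr) (use Fm in simp)
  have Fc: "continuous_on UNIV ?F" using cont by (simp add: continuous_on_eq_continuous_at)
  have "cdf (distr N borel ?F) u = cdf U01 u" for u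
  proof -
    have c1: "cdf (distr N borel ?F) u = measure N {t. ?F t \<le> u}"
      unfolding cdf_def[of "distr N borel ?F"] by (subst measure_distr) (use Fm in \<open>auto simp: vimage_def\<close>)
    show ?thesis
    proof (cases "u < 0")
      case True
      have "\<not> ?F t \<le> u" for t using N.cdf_nonneg[of t] True by linarith
      then have "{t. ?F t \<le> u} = {}" by blast
      then show ?thesis using c1 True by (simp add: cdf_U01)
    next
      case u0: False
      show ?thesis
      proof (cases "1 \<le> u")
        case True
        have "?F t \<le> u" for t using N.cdf_bounded_prob[of t] True by linarith
        then have "{t. ?F t \<le> u} = UNIV" by blast
        then show ?thesis using c1 True u0 N.prob_space by (auto simp: cdf_U01)
      next
        case u1: False
        define S where "S = {t. ?F t \<le> u}"
        show ?thesis
        proof (cases "S = {}")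
          case True
          have "u = 0"
          proof (rule ccontr)
            assume "u \<noteq> 0"
            with u0 have "u > 0" by simp
            then have "eventually (\<lambda>t. ?F t < u) at_bot" using N.cdf_lim_at_bot by (rule order_tendstoD(2)[rotated])
            then obtain t where "?F t < u" by (auto simp: eventually_at_bot_linorder)
            then have "t \<in> S" unfolding S_def by simp
            with True show False by simp
          qed
          then show ?thesis using c1 True unfolding S_def by (simp add: cdf_U01)
        next
          case False
          have "eventually (\<lambda>t. u < ?F t) at_top" using N.cdf_lim_at_top_prob u1 by (intro order_tendstoD) auto
          then obtain T where T: "\<And>t. t \<ge> T \<Longrightarrow> u < ?F t" by (auto simp: eventually_at_top_linorder)
          have "t \<le> T" if "t \<in> S" for t
          proof (rule ccontr)
            assume "\<not> t \<le> T"
            then have "u < ?F t" using T[of t] by simp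
            with that show False unfolding S_def by simp
          qed
          then have bdd: "bdd_above S" unfolding bdd_above_def by blast
          have cl: "closed S" unfolding S_def using Fc by (intro closed_Collect_le) (auto intro: continuous_intros)
          define t0 where "t0 = Sup S"
          have t0S: "t0 \<in> S" unfolding t0_def by (rule closed_contains_Sup[OF False bdd cl])
          have Seq: "S = {..t0}"
          proof
            show "S \<subseteq> {..t0}" unfolding t0_def using bdd by (auto intro: cSup_upper)
            show "{..t0} \<subseteq> S" using t0S mono unfolding S_def by (auto dest: monoD intro: order_trans)
          qed
          have Ft0: "?F t0 = u"
          proof (rule ccontr)
            assume "?F t0 \<noteq> u"
            with t0S have lt: "?F t0 < u" unfolding S_def by simp
            have "(?F \<longlongrightarrow> ?F t0) (at_right t0)" using cont[of t0] by (simp add: continuous_at filterlim_at_split)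
            then have "eventually (\<lambda>t. ?F t < u) (at_right t0)" using lt by (rule order_tendstoD)
            then obtain b where b: "b > t0" "\<And>y. y > t0 \<Longrightarrow> y < b \<Longrightarrow> ?F y < u"
              unfolding eventually_at_right_field by blast
            have "(t0 + b)/2 \<in> S" unfolding S_def using b by (intro CollectI less_imp_le b(2)) auto
            with Seq b show False by auto
          qed
          have "measure N {t. ?F t \<le> u} = measure N {..t0}" using Seq unfolding S_def by simp
          also have "\<dots> = ?F t0" by (simp add: cdf_def)
          finally have "measure N {t. ?F t \<le> u} = ?F t0" .
          then show ?thesis using c1 Ft0 u0 u1 by (simp add: cdf_U01)
        qed
      qed
    qed
  qed
  then show ?thesis by (intro cdf_unique rd U01_real_distribution) auto
qed

lemma powr_integral01:
  fixes c :: real assumes c: "c > 0"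
  shows "((\<lambda>u. (1-u) powr c) has_integral (1/(c+1))) {0..1}"
proof -
  define F where "F u = -(1/(c+1)) * (1-u) powr (c+1)" for u :: real
  have "((\<lambda>u. (1-u) powr c) has_integral (F 1 - F 0)) {0..1}"
  proof (rule fundamental_theorem_of_calculus_interior)
    show "continuous_on {0..1} F" unfolding F_def
      by (intro continuous_intros continuous_on_powr') (use c in \<open>auto intro: continuous_intros\<close>)
  next
    fix x :: real assume x: "x \<in> {0<..<1}"
    have d1: "((\<lambda>z. z powr (c+1)) has_real_derivative (c+1) * (1-x) powr (c+1-1)) (at (1-x))"
      using x by (intro has_real_derivative_powr) auto
    have d2: "((\<lambda>u. 1 - u) has_real_derivative -1) (at x)" by (auto intro!: derivative_eq_intros)
    have "((\<lambda>u. (1-u) powr (c+1)) has_real_derivative (c+1) * (1-x) powr (c+1-1) * -1) (at x)"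
      by (rule DERIV_chain2[OF d1 d2])
    then have "(F has_real_derivative -(1/(c+1)) * ((c+1) * (1-x) powr (c+1-1) * -1)) (at x)"
      unfolding F_def by (rule DERIV_cmult)
    moreover have "-(1/(c+1)) * ((c+1) * (1-x) powr (c+1-1) * -1) = (1-x) powr c"
      using c by (simp add: field_simps)
    ultimately show "(F has_vector_derivative (1-x) powr c) (at x)"
      by (simp add: has_real_derivative_iff_has_vector_derivative)
  qed simp
  moreover have "F 1 - F 0 = 1/(c+1)" unfolding F_def by simp
  ultimately show ?thesis by simp
qed

lemma U01_moment:
  fixes c :: real assumes c: "c > 0"
  shows "(\<integral>u. (1-u) powr c \<partial>U01) = 1/(c+1)"
proof -
  have [measurable]: "(\<lambda>u::real. (1-u) powr c) \<in> borel_measurable borel" by measurable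
  have "(\<integral>\<^sup>+u. ennreal ((1-u) powr c) \<partial>U01) = (\<integral>\<^sup>+u. ennreal ((1-u) powr c) * indicator {0..1} u \<partial>lborel) / emeasure lborel {0..1::real}"
    by (rule nn_integral_uniform_measure) auto
  also have "(\<integral>\<^sup>+u. ennreal ((1-u) powr c) * indicator {0..1} u \<partial>lborel) = (\<integral>\<^sup>+u. ennreal (indicator {0..1} u * (1-u) powr c) \<partial>lborel)"
    by (intro nn_integral_cong) (auto split: split_indicator)
  also have "\<dots> = ennreal (1/(c+1))"
    by (rule nn_integral_has_integral_lebesgue[OF _ powr_integral01[OF c]]) simp
  finally have "(\<integral>\<^sup>+u. ennreal ((1-u) powr c) \<partial>U01) = ennreal (1/(c+1))" by (simp add: emeasure_lborel_Icc_eq divide_ennreal_def)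
  moreover have "(\<integral>u. (1-u) powr c \<partial>U01) = enn2real (\<integral>\<^sup>+u. ennreal ((1-u) powr c) \<partial>U01)"
    by (rule integral_eq_nn_integral) auto
  ultimately show ?thesis using c by simp
qed

abbreviation "Nd \<sigma> \<equiv> density lborel (\<lambda>s. ennreal (normal_density 0 \<sigma> s))"

lemma Nd_real_distribution: "\<sigma> > 0 \<Longrightarrow> real_distribution (Nd \<sigma>)"
  unfolding real_distribution_def real_distribution_axioms_def
  using prob_space_normal_density by auto

lemma Nd_cont: "\<sigma> > 0 \<Longrightarrow> isCont (cdf (Nd \<sigma>)) x"
proof -
  assume s: "\<sigma> > 0"
  interpret real_distribution "Nd \<sigma>" by (rule Nd_real_distribution[OF s])
  have "{x} \<in> null_sets (Nd \<sigma>)"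
  proof (subst null_sets_density_iff)
    show "(\<lambda>s. ennreal (normal_density 0 \<sigma> s)) \<in> borel_measurable lborel" by measurable
    have "AE y in lborel. y \<noteq> x"
      by (rule AE_I'[of "{x}"]) auto
    then have "AE y in lborel. y \<in> {x} \<longrightarrow> ennreal (normal_density 0 \<sigma> y) = 0"
      by eventually_elim auto
    then show "{x} \<in> sets lborel \<and> (AE y in lborel. y \<in> {x} \<longrightarrow> ennreal (normal_density 0 \<sigma> y) = 0)"
      by simp
  qed
  then have "measure (Nd \<sigma>) {x} = 0" by (rule measure_eq_0_null_sets)
  then show ?thesis by (simp add: isCont_cdf)
qed

lemma Phi_cdf: "Phi \<sigma> = cdf (Nd \<sigma>)"
  unfolding Phi_def cdf_def by simp

lemma Phi_moment:
  fixes c :: real assumes c: "c > 0" and s: "\<sigma> > 0"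
  shows "(\<integral>t. (1 - Phi \<sigma> t) powr c \<partial>Nd \<sigma>) = 1/(c+1)"
proof -
  interpret real_distribution "Nd \<sigma>" by (rule Nd_real_distribution[OF s])
  have mono: "mono (cdf (Nd \<sigma>))" by (auto intro: monoI cdf_nondecreasing)
  have Fb[measurable]: "cdf (Nd \<sigma>) \<in> borel_measurable borel" by (rule borel_measurable_mono[OF mono])
  have "(\<integral>u. (1-u) powr c \<partial>U01) = (\<integral>u. (1-u) powr c \<partial>distr (Nd \<sigma>) borel (cdf (Nd \<sigma>)))"
    using PIT[OF Nd_real_distribution[OF s] Nd_cont[OF s]] by simp
  also have "\<dots> = (\<integral>t. (1 - cdf (Nd \<sigma>) t) powr c \<partial>Nd \<sigma>)"
    by (rule integral_distr) auto
  finally show ?thesis using U01_moment[OF c] by (simp add: Phi_cdf)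
qed



definition phi :: "nat \<Rightarrow> real \<Rightarrow> real" where
  "phi c t = (if c = 0 then 1 else if c = 1 then t^2 else (1-t)^2)"

definition cj :: "nat \<Rightarrow> nat \<Rightarrow> nat" where
  "cj j l = (if l < j then 2 else if l = j then 1 else 0)"

lemma cj_Suc_Suc[simp]: "cj (Suc j) (Suc l) = cj j l" by (simp add: cj_def)
lemma cj_Suc_0[simp]: "cj (Suc j) 0 = 2" by (simp add: cj_def)
lemma cj_0_0[simp]: "cj 0 0 = 1" by (simp add: cj_def)
lemma cj_0_Suc[simp]: "cj 0 (Suc l) = 0" by (simp add: cj_def)
lemma phi_0[simp]: "phi 0 t = 1" by (simp add: phi_def)

lemma stick_sq_prod:
  assumes "Suc j \<le> n"
  shows "(stick v j)^2 = (\<Prod>l<n. phi (cj j l) (v l))"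
  using assms
proof (induct n rule: dec_induct)
  case base
  have "(\<Prod>l<Suc j. phi (cj j l) (v l)) = (\<Prod>l<j. phi (cj j l) (v l)) * phi (cj j j) (v j)" by simp
  also have "(\<Prod>l<j. phi (cj j l) (v l)) = (\<Prod>l<j. (1 - v l)^2)"
    by (rule prod.cong) (auto simp: cj_def phi_def)
  also have "phi (cj j j) (v j) = (v j)^2" by (simp add: cj_def phi_def)
  finally show ?case unfolding stick_def by (simp add: power_mult_distrib prod_power_distrib)
next
  case (step n)
  then have "cj j n = 0" by (simp add: cj_def)
  with step show ?case by simp
qed

lemma stick_partial: "(\<Sum>j<n. stick v j) = 1 - (\<Prod>l<n. 1 - v l)"
  by (induct n) (auto simp: stick_def algebra_simps)

lemma stick_facts:
  assumes r: "\<And>l. 0 \<le> v l \<and> v l \<le> 1"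
  shows "summable (\<lambda>j. (stick v j)^2)" "0 \<le> (\<Sum>j. (stick v j)^2)" "(\<Sum>j. (stick v j)^2) \<le> 1"
    "\<And>j. 0 \<le> (stick v j)^2" "\<And>j. (stick v j)^2 \<le> 1"
proof -
  have p0: "0 \<le> stick v j" for j unfolding stick_def using r by (intro mult_nonneg_nonneg prod_nonneg) auto
  have pl: "(\<Prod>l<n. 1 - v l) \<ge> 0" for n using r by (intro prod_nonneg) auto
  have ps: "(\<Sum>j<n. stick v j) \<le> 1" for n unfolding stick_partial using pl[of n] by simp
  have p1: "stick v j \<le> 1" for j
  proof -
    have "0 \<le> (\<Sum>i<j. stick v i)" using p0 by (simp add: sum_nonneg)
    then have "stick v j \<le> (\<Sum>i<Suc j. stick v i)" by simp
    with ps[of "Suc j"] show ?thesis by linarith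
  qed
  have sq: "(stick v j)^2 \<le> stick v j" for j using p0[of j] p1[of j] by (simp add: power2_eq_square mult_left_le)
  have sp: "(\<Sum>j<n. (stick v j)^2) \<le> 1" for n using ps[of n] sum_mono[of "{..<n}" "\<lambda>j. (stick v j)^2" "stick v", OF sq] by simp
  show sm: "summable (\<lambda>j. (stick v j)^2)" by (rule summableI_nonneg_bounded[OF _ sp]) simp
  show "0 \<le> (\<Sum>j. (stick v j)^2)" by (rule suminf_nonneg[OF sm]) simp
  show "(\<Sum>j. (stick v j)^2) \<le> 1" by (rule suminf_le_const[OF sm sp])
  show "\<And>j. 0 \<le> (stick v j)^2" by simp
  show "\<And>j. (stick v j)^2 \<le> 1" using sq p1 order_trans by blast
qed

definition TT :: "(nat \<Rightarrow> nat \<Rightarrow> real) \<Rightarrow> nat \<Rightarrow> nat \<Rightarrow> real" where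
  "TT mm j k = (\<Prod>l<Suc (max j k). mm (cj j l) (cj k l))"

lemma TT_SS: "TT mm (Suc j) (Suc k) = mm 2 2 * TT mm j k"
  unfolding TT_def by (simp only: max_Suc_Suc prod.lessThan_Suc_shift cj_Suc_Suc cj_Suc_0)

lemma TT_00: "TT mm 0 0 = mm 1 1" unfolding TT_def by simp

lemma P0: "(\<Prod>l<Suc k. mm 0 (cj k l)) = mm 0 2 ^ k * mm 0 1"
proof (induct k)
  case 0 then show ?case by simp
next
  case (Suc k)
  have "(\<Prod>l<Suc (Suc k). mm 0 (cj (Suc k) l)) = mm 0 2 * (\<Prod>l<Suc k. mm 0 (cj k l))"
    by (simp only: prod.lessThan_Suc_shift cj_Suc_Suc cj_Suc_0)
  also note Suc.hyps
  finally show ?case by (simp only: power_Suc mult.assoc)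
qed

lemma P1: "(\<Prod>l<Suc k. mm (cj k l) 0) = mm 2 0 ^ k * mm 1 0"
proof (induct k)
  case 0 then show ?case by simp
next
  case (Suc k)
  have "(\<Prod>l<Suc (Suc k). mm (cj (Suc k) l) 0) = mm 2 0 * (\<Prod>l<Suc k. mm (cj k l) 0)"
    by (simp only: prod.lessThan_Suc_shift cj_Suc_Suc cj_Suc_0)
  also note Suc.hyps
  finally show ?case by (simp only: power_Suc mult.assoc)
qed

lemma TT_0S: "TT mm 0 (Suc k) = mm 1 2 * (mm 0 2 ^ k * mm 0 1)"
proof -
  have "TT mm 0 (Suc k) = mm 1 2 * (\<Prod>l<Suc k. mm 0 (cj k l))"
    unfolding TT_def by (simp only: max_0L prod.lessThan_Suc_shift cj_Suc_Suc cj_Suc_0 cj_0_0 cj_0_Suc)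
  then show ?thesis by (simp only: P0)
qed

lemma TT_S0: "TT mm (Suc j) 0 = mm 2 1 * (mm 2 0 ^ j * mm 1 0)"
proof -
  have "TT mm (Suc j) 0 = mm 2 1 * (\<Prod>l<Suc j. mm (cj j l) 0)"
    unfolding TT_def by (simp only: max_0R prod.lessThan_Suc_shift cj_Suc_Suc cj_Suc_0 cj_0_0 cj_0_Suc)
  then show ?thesis by (simp only: P1)
qed

lemma ennreal_split_head: "(suminf f :: ennreal) = f 0 + (\<Sum>j. f (Suc j))"
  using suminf_offset[of f 1] by (simp add: add.commute)

lemma ennreal_geom:
  fixes c q :: real assumes "0 \<le> c" "0 \<le> q" "q < 1"
  shows "(\<Sum>k. ennreal (c * q^k)) = ennreal (c / (1 - q))"
proof -
  have s: "summable (\<lambda>k. c * q^k)" using assms by (intro summable_mult summable_geometric) auto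
  have "(\<Sum>k. c * q^k) = c / (1 - q)" using assms by (simp add: suminf_mult suminf_geometric)
  with s show ?thesis using assms by (subst suminf_ennreal2) auto
qed

lemma double_sum:
  fixes mm :: "nat \<Rightarrow> nat \<Rightarrow> real"
  assumes nn: "\<And>a b. 0 \<le> mm a b" and m22: "mm 2 2 < 1" and m02: "mm 0 2 < 1" and m20: "mm 2 0 < 1"
    and fin: "(\<Sum>j. \<Sum>k. ennreal (TT mm j k)) \<noteq> \<top>"
  shows "(\<Sum>j. \<Sum>k. ennreal (TT mm j k)) =
    ennreal ((mm 1 1 + mm 1 2 * mm 0 1 / (1 - mm 0 2) + mm 2 1 * mm 1 0 / (1 - mm 2 0)) / (1 - mm 2 2))"
proof -
  let ?t = "\<lambda>j k. ennreal (TT mm j k)"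
  define D where "D = (\<Sum>j. \<Sum>k. ?t j k)"
  define r0 where "r0 = mm 1 1 + mm 1 2 * mm 0 1 / (1 - mm 0 2)"
  define c0 where "c0 = mm 2 1 * mm 1 0 / (1 - mm 2 0)"
  have r0n: "0 \<le> r0" unfolding r0_def using nn m02 by (intro add_nonneg_nonneg divide_nonneg_nonneg mult_nonneg_nonneg) auto
  have c0n: "0 \<le> c0" unfolding c0_def using nn m20 by (intro divide_nonneg_nonneg mult_nonneg_nonneg) auto
  have TTn: "\<And>j k. 0 \<le> TT mm j k" unfolding TT_def using nn by (intro prod_nonneg) auto
  have R0: "(\<Sum>k. ?t 0 k) = ennreal r0"
  proof -
    have "(\<Sum>k. ?t 0 k) = ?t 0 0 + (\<Sum>k. ?t 0 (Suc k))" by (rule ennreal_split_head)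
    also have "(\<Sum>k. ?t 0 (Suc k)) = (\<Sum>k. ennreal ((mm 1 2 * mm 0 1) * mm 0 2 ^ k))"
      by (intro arg_cong[where f=suminf] ext) (simp add: TT_0S mult_ac)
    also have "\<dots> = ennreal (mm 1 2 * mm 0 1 / (1 - mm 0 2))"
      using nn m02 by (intro ennreal_geom) auto
    also have "?t 0 0 + ennreal (mm 1 2 * mm 0 1 / (1 - mm 0 2)) = ennreal r0"
      unfolding r0_def TT_00 using nn m02 by (intro ennreal_plus[symmetric] divide_nonneg_nonneg mult_nonneg_nonneg) auto
    finally show ?thesis .
  qed
  have C0: "(\<Sum>j. ?t (Suc j) 0) = ennreal c0"
  proof -
    have "(\<Sum>j. ?t (Suc j) 0) = (\<Sum>j. ennreal ((mm 2 1 * mm 1 0) * mm 2 0 ^ j))"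
      by (intro arg_cong[where f=suminf] ext) (simp add: TT_S0 mult_ac)
    also have "\<dots> = ennreal c0" unfolding c0_def
      using nn m20 by (intro ennreal_geom) auto
    finally show ?thesis .
  qed
  have row: "(\<Sum>k. ?t (Suc j) k) = ?t (Suc j) 0 + ennreal (mm 2 2) * (\<Sum>k. ?t j k)" for j
  proof -
    have "(\<Sum>k. ?t (Suc j) k) = ?t (Suc j) 0 + (\<Sum>k. ?t (Suc j) (Suc k))" by (rule ennreal_split_head)
    also have "(\<Sum>k. ?t (Suc j) (Suc k)) = (\<Sum>k. ennreal (mm 2 2) * ?t j k)"
      using nn TTn by (simp add: TT_SS ennreal_mult)
    also have "\<dots> = ennreal (mm 2 2) * (\<Sum>k. ?t j k)" by (rule ennreal_suminf_cmult)
    finally show ?thesis .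
  qed
  have "D = (\<Sum>k. ?t 0 k) + (\<Sum>j. \<Sum>k. ?t (Suc j) k)" unfolding D_def by (rule ennreal_split_head)
  also have "(\<Sum>j. \<Sum>k. ?t (Suc j) k) = (\<Sum>j. ?t (Suc j) 0 + ennreal (mm 2 2) * (\<Sum>k. ?t j k))"
    by (simp only: row)
  also have "\<dots> = (\<Sum>j. ?t (Suc j) 0) + (\<Sum>j. ennreal (mm 2 2) * (\<Sum>k. ?t j k))"
    by (rule suminf_add[symmetric]) auto
  also have "(\<Sum>j. ennreal (mm 2 2) * (\<Sum>k. ?t j k)) = ennreal (mm 2 2) * D"
    unfolding D_def by (rule ennreal_suminf_cmult)
  finally have eq: "D = ennreal r0 + ennreal c0 + ennreal (mm 2 2) * D" using R0 C0 by (simp add: add.assoc)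
  from fin obtain d where d: "D = ennreal d" "0 \<le> d" unfolding D_def by (cases "\<Sum>j. \<Sum>k. ?t j k") auto
  have m0: "0 \<le> mm 2 2" by (rule nn)
  have e1: "ennreal (mm 2 2) * ennreal d = ennreal (mm 2 2 * d)" using m0 d(2) by (rule ennreal_mult[symmetric])
  have e2: "ennreal r0 + ennreal c0 = ennreal (r0 + c0)" using r0n c0n by (rule ennreal_plus[symmetric])
  have e3: "ennreal (r0 + c0) + ennreal (mm 2 2 * d) = ennreal (r0 + c0 + mm 2 2 * d)"
    using r0n c0n m0 d(2) by (intro ennreal_plus[symmetric]) auto
  have "ennreal d = ennreal r0 + ennreal c0 + ennreal (mm 2 2) * ennreal d" using eq d(1) by simp
  also have "\<dots> = ennreal (r0 + c0 + mm 2 2 * d)" unfolding e1 e2 e3 ..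
  finally have "ennreal d = ennreal (r0 + c0 + mm 2 2 * d)" .
  then have dd: "d = r0 + c0 + mm 2 2 * d" using d(2) r0n c0n m0 by (subst (asm) ennreal_inj) auto
  have "d * (1 - mm 2 2) = r0 + c0" using dd by (simp add: algebra_simps)
  then have "d = (r0 + c0) / (1 - mm 2 2)" using m22 by (simp add: eq_divide_eq)
  then show ?thesis using d unfolding D_def r0_def c0_def by simp
qed



context prob_space
begin

lemma series_expect:
  fixes v w :: "nat \<Rightarrow> 'a \<Rightarrow> real" and mm :: "nat \<Rightarrow> nat \<Rightarrow> real"
  assumes mv[measurable]: "\<And>l. v l \<in> borel_measurable M" and mw[measurable]: "\<And>l. w l \<in> borel_measurable M"
    and rv: "\<And>l \<omega>. 0 \<le> v l \<omega> \<and> v l \<omega> \<le> 1" and rw: "\<And>l \<omega>. 0 \<le> w l \<omega> \<and> w l \<omega> \<le> 1"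
    and prodE: "\<And>n a b. (\<integral>\<omega>. (\<Prod>l<n. phi (a l) (v l \<omega>) * phi (b l) (w l \<omega>)) \<partial>M) = (\<Prod>l<n. mm (a l) (b l))"
    and nn: "\<And>a b. 0 \<le> mm a b" and m22: "mm 2 2 < 1" and m02: "mm 0 2 < 1" and m20: "mm 2 0 < 1"
  shows "(\<integral>\<omega>. (\<Sum>j. (stick (\<lambda>l. v l \<omega>) j)^2) * (\<Sum>j. (stick (\<lambda>l. w l \<omega>) j)^2) \<partial>M) =
    (mm 1 1 + mm 1 2 * mm 0 1 / (1 - mm 0 2) + mm 2 1 * mm 1 0 / (1 - mm 2 0)) / (1 - mm 2 2)"
    and "(\<integral>\<omega>. (\<Sum>j. (stick (\<lambda>l. v l \<omega>) j)^2) \<partial>M) = mm 1 0 / (1 - mm 2 0)"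
    and "(\<integral>\<omega>. (\<Sum>j. (stick (\<lambda>l. w l \<omega>) j)^2) \<partial>M) = mm 0 1 / (1 - mm 0 2)"
proof -
  define a where "a j \<omega> = (stick (\<lambda>l. v l \<omega>) j)^2" for j \<omega>
  define b where "b j \<omega> = (stick (\<lambda>l. w l \<omega>) j)^2" for j \<omega>
  have am[measurable]: "a j \<in> borel_measurable M" for j unfolding a_def stick_def by measurable
  have bm[measurable]: "b j \<in> borel_measurable M" for j unfolding b_def stick_def by measurable
  note fa = stick_facts[of "\<lambda>l. v l \<omega>" for \<omega>, OF rv, folded a_def]
  note fb = stick_facts[of "\<lambda>l. w l \<omega>" for \<omega>, OF rw, folded b_def]
  have a_prod: "a j \<omega> = (\<Prod>l<n. phi (cj j l) (v l \<omega>))" if "Suc j \<le> n" for j n \<omega>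
    unfolding a_def by (rule stick_sq_prod[OF that])
  have b_prod: "b j \<omega> = (\<Prod>l<n. phi (cj j l) (w l \<omega>))" if "Suc j \<le> n" for j n \<omega>
    unfolding b_def by (rule stick_sq_prod[OF that])
  have ab_int: "integrable M (\<lambda>\<omega>. a j \<omega> * b k \<omega>)" for j k
    by (rule integrable_const_bound[where B=1]) (use fa fb in \<open>auto simp: abs_mult intro!: mult_le_one\<close>)
  have abE: "(\<integral>\<omega>. a j \<omega> * b k \<omega> \<partial>M) = TT mm j k" for j k
  proof -
    have "a j \<omega> * b k \<omega> = (\<Prod>l<Suc (max j k). phi (cj j l) (v l \<omega>) * phi (cj k l) (w l \<omega>))" for \<omega>
    proof -
      have l1: "Suc j \<le> Suc (max j k)" and l2: "Suc k \<le> Suc (max j k)" by auto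
      show ?thesis unfolding a_prod[OF l1] b_prod[OF l2] prod.distrib ..
    qed
    then have eq: "(\<lambda>\<omega>. a j \<omega> * b k \<omega>) = (\<lambda>\<omega>. \<Prod>l<Suc (max j k). phi (cj j l) (v l \<omega>) * phi (cj k l) (w l \<omega>))"
      by (rule ext)
    show ?thesis unfolding eq TT_def by (rule prodE)
  qed
  have aE: "(\<integral>\<omega>. a j \<omega> \<partial>M) = mm 1 0 * mm 2 0 ^ j" for j
  proof -
    have "a j \<omega> = (\<Prod>l<Suc j. phi (cj j l) (v l \<omega>) * phi ((\<lambda>_. 0) l) (w l \<omega>))" for \<omega>
      by (simp add: a_prod[of j "Suc j"])
    then have "(\<integral>\<omega>. a j \<omega> \<partial>M) = (\<Prod>l<Suc j. mm (cj j l) 0)" by (simp only: prodE)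
    then show ?thesis by (simp only: P1 mult.commute)
  qed
  have bE: "(\<integral>\<omega>. b j \<omega> \<partial>M) = mm 0 1 * mm 0 2 ^ j" for j
  proof -
    have "b j \<omega> = (\<Prod>l<Suc j. phi ((\<lambda>_. 0) l) (v l \<omega>) * phi (cj j l) (w l \<omega>))" for \<omega>
      by (simp add: b_prod[of j "Suc j"])
    then have "(\<integral>\<omega>. b j \<omega> \<partial>M) = (\<Prod>l<Suc j. mm 0 (cj j l))" by (simp only: prodE)
    then show ?thesis by (simp only: P0 mult.commute)
  qed
  have single: "(\<integral>\<omega>. (\<Sum>j. f j \<omega>) \<partial>M) = c / (1 - q)"
    if fm[measurable]: "\<And>j. f j \<in> borel_measurable M" and f01: "\<And>j \<omega>. 0 \<le> f j \<omega> \<and> f j \<omega> \<le> 1"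
      and fs: "\<And>\<omega>. summable (\<lambda>j. f j \<omega>)" and fE: "\<And>j. (\<integral>\<omega>. f j \<omega> \<partial>M) = c * q ^ j"
      and cq: "0 \<le> c" "0 \<le> q" "q < 1"
    for f :: "nat \<Rightarrow> 'a \<Rightarrow> real" and c q
  proof -
    have fi: "integrable M (f j)" for j by (rule integrable_const_bound[where B=1]) (use f01 in auto)
    have sg: "summable (\<lambda>j. c * q ^ j)" using cq by (intro summable_mult summable_geometric) auto
    have "(\<integral>\<omega>. (\<Sum>j. f j \<omega>) \<partial>M) = (\<Sum>j. \<integral>\<omega>. f j \<omega> \<partial>M)"
    proof (rule integral_suminf)
      show "\<And>i. integrable M (f i)" by (rule fi)
      show "AE x in M. summable (\<lambda>i. norm (f i x))" using fs f01 by (simp add: abs_of_nonneg)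
      show "summable (\<lambda>i. \<integral>x. norm (f i x) \<partial>M)" using f01 fE sg by (simp add: abs_of_nonneg)
    qed
    also have "\<dots> = c / (1 - q)" using cq by (simp add: fE suminf_mult suminf_geometric)
    finally show ?thesis .
  qed
  show "(\<integral>\<omega>. (\<Sum>j. (stick (\<lambda>l. v l \<omega>) j)^2) \<partial>M) = mm 1 0 / (1 - mm 2 0)"
    unfolding a_def[symmetric] using fa nn m20
    by (intro single[of a "mm 1 0" "mm 2 0"]) (auto simp: aE)
  show "(\<integral>\<omega>. (\<Sum>j. (stick (\<lambda>l. w l \<omega>) j)^2) \<partial>M) = mm 0 1 / (1 - mm 0 2)"
    unfolding b_def[symmetric] using fb nn m02
    by (intro single[of b "mm 0 1" "mm 0 2"]) (auto simp: bE)
  define A1 where "A1 \<omega> = (\<Sum>j. a j \<omega>)" for \<omega>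
  define A2 where "A2 \<omega> = (\<Sum>j. b j \<omega>)" for \<omega>
  have A1m[measurable]: "A1 \<in> borel_measurable M" unfolding A1_def by measurable
  have A2m[measurable]: "A2 \<in> borel_measurable M" unfolding A2_def by measurable
  have A1r: "0 \<le> A1 \<omega>" "A1 \<omega> \<le> 1" for \<omega> unfolding A1_def using fa by auto
  have A2r: "0 \<le> A2 \<omega>" "A2 \<omega> \<le> 1" for \<omega> unfolding A2_def using fb by auto
  have expand: "ennreal (A1 \<omega> * A2 \<omega>) = (\<Sum>j. \<Sum>k. ennreal (a j \<omega> * b k \<omega>))" for \<omega>
  proof -
    have sa: "summable (\<lambda>j. a j \<omega>)" using fa by auto
    have sb: "summable (\<lambda>k. b k \<omega>)" using fb by auto
    have "A1 \<omega> * A2 \<omega> = (\<Sum>j. a j \<omega> * A2 \<omega>)" unfolding A1_def by (rule suminf_mult2[OF sa])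
    then have "ennreal (A1 \<omega> * A2 \<omega>) = (\<Sum>j. ennreal (a j \<omega> * A2 \<omega>))"
      using summable_mult2[OF sa] fa A2r by (simp add: suminf_ennreal2)
    also have "\<dots> = (\<Sum>j. \<Sum>k. ennreal (a j \<omega> * b k \<omega>))"
    proof (rule arg_cong[where f=suminf], rule ext)
      fix j
      have "a j \<omega> * A2 \<omega> = (\<Sum>k. a j \<omega> * b k \<omega>)" unfolding A2_def by (rule suminf_mult[OF sb, symmetric])
      then show "ennreal (a j \<omega> * A2 \<omega>) = (\<Sum>k. ennreal (a j \<omega> * b k \<omega>))"
        using summable_mult[OF sb] fa fb by (simp add: suminf_ennreal2)
    qed
    finally show ?thesis .
  qed
  have nnE: "(\<integral>\<^sup>+\<omega>. ennreal (A1 \<omega> * A2 \<omega>) \<partial>M) = (\<Sum>j. \<Sum>k. ennreal (TT mm j k))"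
  proof -
    have "(\<integral>\<^sup>+\<omega>. ennreal (A1 \<omega> * A2 \<omega>) \<partial>M) = (\<integral>\<^sup>+\<omega>. (\<Sum>j. \<Sum>k. ennreal (a j \<omega> * b k \<omega>)) \<partial>M)"
      by (simp only: expand)
    also have "\<dots> = (\<Sum>j. \<integral>\<^sup>+\<omega>. (\<Sum>k. ennreal (a j \<omega> * b k \<omega>)) \<partial>M)"
      by (rule nn_integral_suminf) measurable
    also have "\<dots> = (\<Sum>j. \<Sum>k. \<integral>\<^sup>+\<omega>. ennreal (a j \<omega> * b k \<omega>) \<partial>M)"
      by (intro arg_cong[where f=suminf] ext nn_integral_suminf) measurable
    also have "\<dots> = (\<Sum>j. \<Sum>k. ennreal (TT mm j k))"
    proof (intro arg_cong[where f=suminf] ext)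
      fix j k
      show "(\<integral>\<^sup>+\<omega>. ennreal (a j \<omega> * b k \<omega>) \<partial>M) = ennreal (TT mm j k)"
        using nn_integral_eq_integral[OF ab_int[of j k]] fa fb abE[of j k] by simp
    qed
    finally show ?thesis .
  qed
  have fin: "(\<Sum>j. \<Sum>k. ennreal (TT mm j k)) \<noteq> \<top>"
  proof -
    have "(\<integral>\<^sup>+\<omega>. ennreal (A1 \<omega> * A2 \<omega>) \<partial>M) \<le> (\<integral>\<^sup>+\<omega>. 1 \<partial>M)"
      using A1r A2r by (intro nn_integral_mono) (auto intro!: mult_le_one)
    also have "\<dots> = 1" by (simp add: emeasure_space_1)
    finally show ?thesis unfolding nnE by (auto simp: top_unique)
  qed
  have val: "(\<Sum>j. \<Sum>k. ennreal (TT mm j k)) =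
    ennreal ((mm 1 1 + mm 1 2 * mm 0 1 / (1 - mm 0 2) + mm 2 1 * mm 1 0 / (1 - mm 2 0)) / (1 - mm 2 2))"
    by (rule double_sum[OF nn m22 m02 m20 fin])
  have vnn: "0 \<le> (mm 1 1 + mm 1 2 * mm 0 1 / (1 - mm 0 2) + mm 2 1 * mm 1 0 / (1 - mm 2 0)) / (1 - mm 2 2)"
    using nn m22 m02 m20 by (intro divide_nonneg_nonneg add_nonneg_nonneg mult_nonneg_nonneg) auto
  have "(\<integral>\<omega>. A1 \<omega> * A2 \<omega> \<partial>M) = enn2real (\<integral>\<^sup>+\<omega>. ennreal (A1 \<omega> * A2 \<omega>) \<partial>M)"
    by (rule integral_eq_nn_integral) (use A1r A2r in auto)
  also have "\<dots> = (mm 1 1 + mm 1 2 * mm 0 1 / (1 - mm 0 2) + mm 2 1 * mm 1 0 / (1 - mm 2 0)) / (1 - mm 2 2)"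
    unfolding nnE val using vnn by simp
  finally show "(\<integral>\<omega>. (\<Sum>j. (stick (\<lambda>l. v l \<omega>) j)^2) * (\<Sum>j. (stick (\<lambda>l. w l \<omega>) j)^2) \<partial>M) =
    (mm 1 1 + mm 1 2 * mm 0 1 / (1 - mm 0 2) + mm 2 1 * mm 1 0 / (1 - mm 2 0)) / (1 - mm 2 2)"
    unfolding A1_def A2_def a_def b_def .
qed

end



lemma phi_cont: "continuous_on UNIV (phi c)"
  unfolding phi_def by (cases "c = 0"; cases "c = 1") (auto intro!: continuous_intros)

lemma phi_meas[measurable]: "phi c \<in> borel_measurable borel"
  by (rule borel_measurable_continuous_onI[OF phi_cont])

lemma phi_bound: "0 \<le> t \<Longrightarrow> t \<le> 1 \<Longrightarrow> 0 \<le> phi c t \<and> phi c t \<le> 1"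
  unfolding phi_def by (auto simp: power_le_one)

definition hh :: "real \<Rightarrow> real \<Rightarrow> real \<Rightarrow> real" where
  "hh M \<sigma> z = Beta_inv_cdf M (Phi \<sigma> z)"

lemma Phi_range: "\<sigma> > 0 \<Longrightarrow> 0 \<le> Phi \<sigma> t \<and> Phi \<sigma> t \<le> 1"
proof -
  assume s: "\<sigma> > 0"
  interpret real_distribution "Nd \<sigma>" by (rule Nd_real_distribution[OF s])
  show ?thesis unfolding Phi_cdf using cdf_nonneg cdf_bounded_prob by auto
qed

lemma hh_range: "M > 0 \<Longrightarrow> \<sigma> > 0 \<Longrightarrow> 0 \<le> hh M \<sigma> z \<and> hh M \<sigma> z \<le> 1"
proof -
  assume M: "M > 0" and s: "\<sigma> > 0"
  have u: "0 \<le> 1 - Phi \<sigma> z" "1 - Phi \<sigma> z \<le> 1" using Phi_range[OF s, of z] by auto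
  have "(1 - Phi \<sigma> z) powr (1/M) \<le> 1" using u M by (intro powr_le1) auto
  then show ?thesis unfolding hh_def Beta_inv_cdf_def by simp
qed

lemma Phi_cont: "\<sigma> > 0 \<Longrightarrow> continuous_on UNIV (Phi \<sigma>)"
  unfolding Phi_cdf using Nd_cont by (simp add: continuous_on_eq_continuous_at)

lemma hh_cont: "M > 0 \<Longrightarrow> \<sigma> > 0 \<Longrightarrow> continuous_on UNIV (hh M \<sigma>)"
proof -
  assume M: "M > 0" and s: "\<sigma> > 0"
  have "continuous_on UNIV (\<lambda>z. (1 - Phi \<sigma> z) powr (1/M))"
    using Phi_cont[OF s] Phi_range[OF s] M
    by (intro continuous_on_powr') (auto intro!: continuous_intros)
  then show ?thesis unfolding hh_def[abs_def] Beta_inv_cdf_def by (rule continuous_on_diff[OF continuous_on_const])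
qed

lemma hh_meas[measurable]: "M > 0 \<Longrightarrow> \<sigma> > 0 \<Longrightarrow> hh M \<sigma> \<in> borel_measurable borel"
  by (rule borel_measurable_continuous_onI[OF hh_cont])

lemma W_pow: "k \<ge> 1 \<Longrightarrow> (1 - hh M \<sigma> z)^k = (1 - Phi \<sigma> z) powr (real k / M)"
proof -
  assume k: "k \<ge> 1"
  have e: "1 - hh M \<sigma> z = (1 - Phi \<sigma> z) powr (1/M)" unfolding hh_def Beta_inv_cdf_def by simp
  show ?thesis
  proof (cases "1 - Phi \<sigma> z = 0")
    case True
    then show ?thesis unfolding e using k by (simp add: power_0_left)
  next
    case False
    then show ?thesis unfolding e by (simp add: powr_power)
  qed
qed

lemma gp_meas: "centered_gaussian_process P S C Z \<Longrightarrow> x \<in> S \<Longrightarrow> Z x \<in> borel_measurable P"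
  unfolding centered_gaussian_process_def by auto

lemma gp_pair:
  assumes "centered_gaussian_process P S C Z" "x \<in> S" "y \<in> S"
  shows "distr P borel (\<lambda>\<omega>. a * Z x \<omega> + b * Z y \<omega>) =
         gauss_law (a*a*C x x + a*b*C x y + (b*a*C y x + b*b*C y y))"
proof -
  have "distr P borel (\<lambda>\<omega>. \<Sum>i<length [x,y]. [a,b] ! i * Z ([x,y] ! i) \<omega>) =
        gauss_law (\<Sum>i<length [x,y]. \<Sum>k<length [x,y]. [a,b] ! i * [a,b] ! k * C ([x,y] ! i) ([x,y] ! k))"
  proof -
    have "\<forall>(xs::real list) (cs::real list). length cs = length xs \<and> set xs \<subseteq> S \<longrightarrow>
        distr P borel (\<lambda>\<omega>. \<Sum>i<length xs. cs ! i * Z (xs ! i) \<omega>) =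
        gauss_law (\<Sum>i<length xs. \<Sum>k<length xs. cs ! i * cs ! k * C (xs ! i) (xs ! k))"
      using assms(1) unfolding centered_gaussian_process_def by blast
    from this[rule_format, of "[a,b]" "[x,y]"] assms(2,3) show ?thesis by simp
  qed
  then show ?thesis by (simp add: numeral_2_eq_2 algebra_simps)
qed

lemma gauss_law_Nd: "\<sigma> > 0 \<Longrightarrow> gauss_law (\<sigma>^2) = Nd \<sigma>"
  unfolding gauss_law_def by simp

lemma W_moment:
  assumes P: "prob_space P" and gp: "centered_gaussian_process P S (\<lambda>x1 x2. \<sigma>^2 * K (x1 - x2)) Z"
    and x: "x \<in> S" and K0: "K 0 = 1" and s: "\<sigma> > 0" and M: "M > 0" and k: "k \<ge> 1"
  shows "(\<integral>\<omega>. (1 - hh M \<sigma> (Z x \<omega>))^k \<partial>P) = M / (M + real k)"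
proof -
  have [measurable]: "Z x \<in> borel_measurable P" by (rule gp_meas[OF gp x])
  have hm[measurable]: "hh M \<sigma> \<in> borel_measurable borel" using M s by (rule hh_meas)
  have d: "distr P borel (Z x) = Nd \<sigma>"
  proof -
    have "distr P borel (\<lambda>\<omega>. 1 * Z x \<omega> + 0 * Z x \<omega>) = gauss_law (\<sigma>^2)"
      using gp_pair[OF gp x x, of 1 0] K0 by simp
    then show ?thesis using gauss_law_Nd[OF s] by simp
  qed
  have "(\<integral>\<omega>. (1 - hh M \<sigma> (Z x \<omega>))^k \<partial>P) = (\<integral>t. (1 - hh M \<sigma> t)^k \<partial>distr P borel (Z x))"
    by (rule integral_distr[symmetric]) auto
  also have "\<dots> = (\<integral>t. (1 - Phi \<sigma> t) powr (real k / M) \<partial>Nd \<sigma>)" unfolding d using k by (simp add: W_pow)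
  also have "\<dots> = 1 / (real k / M + 1)" using k M s by (intro Phi_moment) auto
  also have "\<dots> = M / (M + real k)" using M by (simp add: field_simps)
  finally show ?thesis .
qed



context prob_space
begin

lemma lin_int:
  fixes f1 f2 f3 f4 :: "'a \<Rightarrow> real"
  assumes "integrable M f1" "integrable M f2" "integrable M f3" "integrable M f4"
  shows "(\<integral>\<omega>. c0 + c1 * f1 \<omega> + c2 * f2 \<omega> + c3 * f3 \<omega> + c4 * f4 \<omega> \<partial>M)
       = c0 + c1 * (\<integral>\<omega>. f1 \<omega> \<partial>M) + c2 * (\<integral>\<omega>. f2 \<omega> \<partial>M) + c3 * (\<integral>\<omega>. f3 \<omega> \<partial>M) + c4 * (\<integral>\<omega>. f4 \<omega> \<partial>M)"
  using assms by (simp add: prob_space)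

lemma cov_formula:
  fixes X Y :: "'a \<Rightarrow> real"
  assumes [measurable]: "X \<in> borel_measurable M" "Y \<in> borel_measurable M"
    and b: "\<And>\<omega>. \<bar>X \<omega>\<bar> \<le> 1" "\<And>\<omega>. \<bar>Y \<omega>\<bar> \<le> 1"
  shows "(\<integral>\<omega>. (X \<omega> - expectation X) * (Y \<omega> - expectation Y) \<partial>M) = (\<integral>\<omega>. X \<omega> * Y \<omega> \<partial>M) - expectation X * expectation Y"
proof -
  have iX: "integrable M X" by (rule integrable_const_bound[where B=1]) (use b in auto)
  have iY: "integrable M Y" by (rule integrable_const_bound[where B=1]) (use b in auto)
  have iXY: "integrable M (\<lambda>\<omega>. X \<omega> * Y \<omega>)" by (rule integrable_const_bound[where B=1]) (use b in \<open>auto simp: abs_mult intro!: AE_I2 mult_le_one\<close>)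
  have "(\<lambda>\<omega>. (X \<omega> - expectation X) * (Y \<omega> - expectation Y)) =
        (\<lambda>\<omega>. X \<omega> * Y \<omega> + (- expectation Y) * X \<omega> + (- expectation X) * Y \<omega> + expectation X * expectation Y)"
    by (rule ext) (simp add: algebra_simps)
  then show ?thesis using iX iY iXY by (simp add: prob_space)
qed

end

lemma polyW:
  fixes Z :: "real \<Rightarrow> 'a \<Rightarrow> real"
  assumes P: "prob_space P" and gp: "centered_gaussian_process P S (\<lambda>x1 x2. \<sigma>^2 * K (x1 - x2)) Z"
    and x: "x \<in> S" and K0: "K 0 = 1" and s: "\<sigma> > 0" and M: "M > 0"
  shows "(\<integral>\<omega>. c0 + c1 * (1 - hh M \<sigma> (Z x \<omega>))^1 + c2 * (1 - hh M \<sigma> (Z x \<omega>))^2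
      + c3 * (1 - hh M \<sigma> (Z x \<omega>))^3 + c4 * (1 - hh M \<sigma> (Z x \<omega>))^4 \<partial>P)
    = c0 + c1 * (M/(M+1)) + c2 * (M/(M+2)) + c3 * (M/(M+3)) + c4 * (M/(M+4))"
proof -
  interpret prob_space P by (rule P)
  have [measurable]: "Z x \<in> borel_measurable P" by (rule gp_meas[OF gp x])
  have hm[measurable]: "hh M \<sigma> \<in> borel_measurable borel" using M s by (rule hh_meas)
  have hr: "0 \<le> hh M \<sigma> t \<and> hh M \<sigma> t \<le> 1" for t using hh_range[OF M s] .
  have Wint: "integrable P (\<lambda>\<omega>. (1 - hh M \<sigma> (Z x \<omega>))^k)" for k
    by (rule integrable_const_bound[where B=1]) (use hr in \<open>auto simp: abs_le_iff intro!: AE_I2 power_le_one\<close>)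
  have mom: "(\<integral>\<omega>. (1 - hh M \<sigma> (Z x \<omega>))^k \<partial>P) = M / (M + real k)" if "k \<ge> 1" for k
    by (rule W_moment[OF P gp x K0 s M that])
  show ?thesis
    unfolding lin_int[OF Wint Wint Wint Wint] using mom[of 1] mom[of 2] mom[of 3] mom[of 4] by simp
qed

lemma pair_result:
  fixes Z :: "nat \<Rightarrow> real \<Rightarrow> 'a \<Rightarrow> real"
  assumes P: "prob_space P" and M: "M > 0" and s: "\<sigma>Z > 0" and K0: "K 0 = 1"
    and gp: "\<And>j. centered_gaussian_process P S (\<lambda>x1 x2. \<sigma>Z\<^sup>2 * K (x1 - x2)) (Z j)"
    and ind: "prob_space.indep_vars P (\<lambda>_. Pi\<^sub>M S (\<lambda>_. borel)) (\<lambda>j \<omega>. restrict (\<lambda>x. Z j x \<omega>) S) UNIV"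
    and x1: "x1 \<in> S" and x2: "x2 \<in> S"
  defines "mm \<equiv> \<lambda>a b. \<integral>\<omega>. phi a (hh M \<sigma>Z (Z 0 x1 \<omega>)) * phi b (hh M \<sigma>Z (Z 0 x2 \<omega>)) \<partial>P"
  shows "(\<integral>\<omega>. (\<Sum>j. (stick (\<lambda>l. hh M \<sigma>Z (Z l x1 \<omega>)) j)^2) * (\<Sum>j. (stick (\<lambda>l. hh M \<sigma>Z (Z l x2 \<omega>)) j)^2) \<partial>P)
           = (mm 1 1 + 2 * mm 1 2 * mm 1 0 / (1 - mm 2 0)) / (1 - mm 2 2)"
    and "(\<integral>\<omega>. (\<Sum>j. (stick (\<lambda>l. hh M \<sigma>Z (Z l x1 \<omega>)) j)^2) \<partial>P) = 1 / (M + 1)"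
    and "(\<integral>\<omega>. (\<Sum>j. (stick (\<lambda>l. hh M \<sigma>Z (Z l x2 \<omega>)) j)^2) \<partial>P) = 1 / (M + 1)"
    and "mm 1 0 / (1 - mm 2 0) = 1 / (M + 1)" "mm 2 0 < 1" "mm 2 2 < 1"
proof -
  interpret prob_space P by (rule P)
  define v where "v l \<omega> = hh M \<sigma>Z (Z l x1 \<omega>)" for l \<omega>
  define w where "w l \<omega> = hh M \<sigma>Z (Z l x2 \<omega>)" for l \<omega>
  have hm[measurable]: "hh M \<sigma>Z \<in> borel_measurable borel" using M s by (rule hh_meas)
  have Zm[measurable]: "Z l x \<in> borel_measurable P" if "x \<in> S" for l x using gp_meas[OF gp that] .
  have Z1[measurable]: "Z l x1 \<in> borel_measurable P" for l using Zm[OF x1] .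
  have Z2[measurable]: "Z l x2 \<in> borel_measurable P" for l using Zm[OF x2] .
  have vm[measurable]: "v l \<in> borel_measurable P" for l unfolding v_def by measurable
  have wm[measurable]: "w l \<in> borel_measurable P" for l unfolding w_def by measurable
  have hr: "0 \<le> hh M \<sigma>Z t \<and> hh M \<sigma>Z t \<le> 1" for t using hh_range[OF M s] .
  have rv: "0 \<le> v l \<omega> \<and> v l \<omega> \<le> 1" for l \<omega> unfolding v_def by (rule hr)
  have rw: "0 \<le> w l \<omega> \<and> w l \<omega> \<le> 1" for l \<omega> unfolding w_def by (rule hr)
  have pc: "continuous_on UNIV (\<lambda>t. phi a (hh M \<sigma>Z t))" for a
    by (rule continuous_on_compose2[OF phi_cont hh_cont[OF M s]]) auto
  have pb: "\<bar>phi a (hh M \<sigma>Z t)\<bar> \<le> 1" for a t using phi_bound[of "hh M \<sigma>Z t" a] hr[of t] by auto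
  have law: "distr P borel (\<lambda>\<omega>. a * Z l x \<omega> + b * Z l y \<omega>) = distr P borel (\<lambda>\<omega>. a * Z l' x' \<omega> + b * Z l' y' \<omega>)"
    if "x \<in> S" "y \<in> S" "x' \<in> S" "y' \<in> S" "K (x - y) + K (y - x) = K (x' - y') + K (y' - x')" for a b l l' x y x' y'
  proof -
    have "distr P borel (\<lambda>\<omega>. a * Z l x \<omega> + b * Z l y \<omega>) = gauss_law (a*a*(\<sigma>Z\<^sup>2 * K 0) + a*b*(\<sigma>Z\<^sup>2 * K (x - y)) + (b*a*(\<sigma>Z\<^sup>2 * K (y - x)) + b*b*(\<sigma>Z\<^sup>2 * K 0)))"
      using gp_pair[OF gp that(1,2)] by simp
    also have "\<dots> = gauss_law (a*a*(\<sigma>Z\<^sup>2 * K 0) + a*b*(\<sigma>Z\<^sup>2 * K (x' - y')) + (b*a*(\<sigma>Z\<^sup>2 * K (y' - x')) + b*b*(\<sigma>Z\<^sup>2 * K 0)))"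
    proof -
      have "a*b*(\<sigma>Z\<^sup>2 * K (x - y)) + b*a*(\<sigma>Z\<^sup>2 * K (y - x)) = a*b*\<sigma>Z\<^sup>2 * (K (x - y) + K (y - x))" by (simp add: algebra_simps)
      also have "\<dots> = a*b*(\<sigma>Z\<^sup>2 * K (x' - y')) + b*a*(\<sigma>Z\<^sup>2 * K (y' - x'))" using that(5) by (simp add: algebra_simps)
      finally show ?thesis by (simp add: algebra_simps)
    qed
    also have "\<dots> = distr P borel (\<lambda>\<omega>. a * Z l' x' \<omega> + b * Z l' y' \<omega>)"
      using gp_pair[OF gp that(3,4)] by simp
    finally show ?thesis .
  qed
  have ident: "(\<integral>\<omega>. phi a (v l \<omega>) * phi b (w l \<omega>) \<partial>P) = mm a b" for l a b
    unfolding mm_def v_def w_def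
    by (rule CW[OF Z1 Z2 Z1 Z2 _ pc pc pb pb]) (rule law[OF x1 x2 x1 x2], simp)
  have prodE: "(\<integral>\<omega>. (\<Prod>l<n. phi (a l) (v l \<omega>) * phi (b l) (w l \<omega>)) \<partial>P) = (\<Prod>l<n. mm (a l) (b l))" for n a b
  proof -
    define G where "G l f = phi (a l) (hh M \<sigma>Z (f x1)) * phi (b l) (hh M \<sigma>Z (f x2))" for l and f :: "real \<Rightarrow> real"
    have Gm: "G l \<in> borel_measurable (Pi\<^sub>M S (\<lambda>_. borel))" for l
    proof -
      have c1: "(\<lambda>f. f x1) \<in> borel_measurable (Pi\<^sub>M S (\<lambda>_. borel))" by (rule measurable_component_singleton[OF x1])
      have c2: "(\<lambda>f. f x2) \<in> borel_measurable (Pi\<^sub>M S (\<lambda>_. borel))" by (rule measurable_component_singleton[OF x2])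
      have pm: "(\<lambda>t. phi c (hh M \<sigma>Z t)) \<in> borel_measurable borel" for c
        by (rule measurable_compose[OF hm phi_meas])
      have "(\<lambda>f. phi (a l) (hh M \<sigma>Z (f x1))) \<in> borel_measurable (Pi\<^sub>M S (\<lambda>_. borel))"
        by (rule measurable_compose[OF c1 pm])
      moreover have "(\<lambda>f. phi (b l) (hh M \<sigma>Z (f x2))) \<in> borel_measurable (Pi\<^sub>M S (\<lambda>_. borel))"
        by (rule measurable_compose[OF c2 pm])
      ultimately show ?thesis unfolding G_def by (rule borel_measurable_times)
    qed
    have "indep_vars (\<lambda>_. borel) (\<lambda>l \<omega>. G l (restrict (\<lambda>x. Z l x \<omega>) S)) UNIV"
      by (rule indep_vars_compose2[OF ind Gm])
    then have iv: "indep_vars (\<lambda>_. borel) (\<lambda>l \<omega>. G l (restrict (\<lambda>x. Z l x \<omega>) S)) {..<n}"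
      by (rule indep_vars_subset) auto
    have Geq: "G l (restrict (\<lambda>x. Z l x \<omega>) S) = phi (a l) (v l \<omega>) * phi (b l) (w l \<omega>)" for l \<omega>
      unfolding G_def v_def w_def using x1 x2 by simp
    have ii: "integrable P (\<lambda>\<omega>. G l (restrict (\<lambda>x. Z l x \<omega>) S))" for l
      unfolding Geq by (rule integrable_const_bound[where B=1]) (use pb in \<open>auto simp: abs_mult v_def w_def intro!: AE_I2 mult_le_one\<close>)
    have "(\<integral>\<omega>. (\<Prod>l<n. G l (restrict (\<lambda>x. Z l x \<omega>) S)) \<partial>P) = (\<Prod>l<n. \<integral>\<omega>. G l (restrict (\<lambda>x. Z l x \<omega>) S) \<partial>P)"
      by (rule indep_vars_lebesgue_integral[OF _ iv ii]) auto
    then show ?thesis unfolding Geq ident .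
  qed
  have mmn: "0 \<le> mm a b" for a b unfolding mm_def
    using phi_bound hr by (intro integral_nonneg_AE AE_I2 mult_nonneg_nonneg) auto
  have mom1: "(\<integral>\<omega>. (1 - hh M \<sigma>Z (Z 0 x \<omega>))^k \<partial>P) = M / (M + real k)" if "x \<in> S" "k \<ge> 1" for x k
    using W_moment[OF P gp that(1) K0 s M that(2)] .
  have Wint: "integrable P (\<lambda>\<omega>. (1 - hh M \<sigma>Z (Z 0 x \<omega>))^k)" if "x \<in> S" for x k
  proof -
    have [measurable]: "Z 0 x \<in> borel_measurable P" using Zm[OF that] .
    show ?thesis by (rule integrable_const_bound[where B=1]) (use hr in \<open>auto simp: power_le_one abs_le_iff intro: power_le_one\<close>)
  qed
  have m20: "mm 2 0 = M / (M + 2)"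
    unfolding mm_def phi_def using mom1[OF x1, of 2] by simp
  have m02: "mm 0 2 = M / (M + 2)"
    unfolding mm_def phi_def using mom1[OF x2, of 2] by simp
  have v2: "(\<integral>\<omega>. (hh M \<sigma>Z (Z 0 x \<omega>))^2 \<partial>P) = 1 - 2 * (M / (M+1)) + M / (M+2)" if x: "x \<in> S" for x
  proof -
    let ?W = "\<lambda>k \<omega>. (1 - hh M \<sigma>Z (Z 0 x \<omega>))^k"
    have eq: "(\<lambda>\<omega>. (hh M \<sigma>Z (Z 0 x \<omega>))^2) = (\<lambda>\<omega>. 1 + (-2) * ?W 1 \<omega> + 1 * ?W 2 \<omega> + 0 * ?W 3 \<omega> + 0 * ?W 4 \<omega>)"
      by (rule ext) (simp add: power2_eq_square algebra_simps)
    show ?thesis unfolding eq polyW[OF P gp x K0 s M] by simp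
  qed
  have m10: "mm 1 0 = 1 - 2 * (M / (M+1)) + M / (M+2)" unfolding mm_def phi_def using v2[OF x1] by simp
  have m01: "mm 0 1 = 1 - 2 * (M / (M+1)) + M / (M+2)" unfolding mm_def phi_def using v2[OF x2] by simp
  have m21: "mm 2 1 = mm 1 2"
  proof -
    have "mm 2 1 = (\<integral>\<omega>. phi 1 (hh M \<sigma>Z (Z 0 x2 \<omega>)) * phi 2 (hh M \<sigma>Z (Z 0 x1 \<omega>)) \<partial>P)"
      unfolding mm_def by (simp add: mult.commute)
    also have "\<dots> = mm 1 2" unfolding mm_def
      by (rule CW[OF Z2 Z1 Z1 Z2 _ pc pc pb pb]) (rule law[OF x2 x1 x1 x2], simp)
    finally show ?thesis .
  qed
  have Mp: "0 < M + 1" "0 < M + 2" using M by auto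
  have m20l: "mm 2 0 < 1" unfolding m20 using M by simp
  have m02l: "mm 0 2 < 1" unfolding m02 using M by simp
  have m22l: "mm 2 2 < 1"
  proof -
    have "mm 2 2 \<le> mm 2 0" unfolding mm_def
    proof (rule integral_mono)
      show "integrable P (\<lambda>\<omega>. phi 2 (hh M \<sigma>Z (Z 0 x1 \<omega>)) * phi 2 (hh M \<sigma>Z (Z 0 x2 \<omega>)))"
        by (rule integrable_const_bound[where B=1]) (use pb in \<open>auto simp: abs_mult intro!: AE_I2 mult_le_one\<close>)
      show "integrable P (\<lambda>\<omega>. phi 2 (hh M \<sigma>Z (Z 0 x1 \<omega>)) * phi 0 (hh M \<sigma>Z (Z 0 x2 \<omega>)))"
        by (rule integrable_const_bound[where B=1]) (use pb in \<open>auto simp: abs_mult intro!: AE_I2 mult_le_one\<close>)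
      fix \<omega>
      show "phi 2 (hh M \<sigma>Z (Z 0 x1 \<omega>)) * phi 2 (hh M \<sigma>Z (Z 0 x2 \<omega>)) \<le> phi 2 (hh M \<sigma>Z (Z 0 x1 \<omega>)) * phi 0 (hh M \<sigma>Z (Z 0 x2 \<omega>))"
        using phi_bound[of "hh M \<sigma>Z (Z 0 x1 \<omega>)" 2] phi_bound[of "hh M \<sigma>Z (Z 0 x2 \<omega>)" 2] hr
        by (auto intro: mult_left_le)
    qed
    with m20l show ?thesis by simp
  qed
  have e1: "1 - 2 * (M / (M+1)) + M / (M+2) = 2 / ((M+1)*(M+2))" using Mp by (simp add: field_simps)
  have e2: "1 - M / (M + 2) = 2 / (M+2)" using Mp by (simp add: field_simps)
  have e3: "2 / ((M+1)*(M+2)) = (2/(M+2)) * (1/(M+1))" by simp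
  have e4: "2/(M+2) \<noteq> 0" using Mp by simp
  have EA: "mm 1 0 / (1 - mm 2 0) = 1 / (M + 1)" unfolding m10 m20 e1 e2 e3 by (rule nonzero_mult_div_cancel_left[OF e4])
  note SE = series_expect[OF vm wm rv rw prodE mmn m22l m02l m20l]
  show "(\<integral>\<omega>. (\<Sum>j. (stick (\<lambda>l. hh M \<sigma>Z (Z l x1 \<omega>)) j)^2) * (\<Sum>j. (stick (\<lambda>l. hh M \<sigma>Z (Z l x2 \<omega>)) j)^2) \<partial>P)
           = (mm 1 1 + 2 * mm 1 2 * mm 1 0 / (1 - mm 2 0)) / (1 - mm 2 2)"
    using SE(1) unfolding v_def w_def m21 m02[folded m20] m01[folded m10] by (simp add: field_simps)
  show "(\<integral>\<omega>. (\<Sum>j. (stick (\<lambda>l. hh M \<sigma>Z (Z l x1 \<omega>)) j)^2) \<partial>P) = 1 / (M + 1)"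
    using SE(2) EA unfolding v_def by simp
  show "(\<integral>\<omega>. (\<Sum>j. (stick (\<lambda>l. hh M \<sigma>Z (Z l x2 \<omega>)) j)^2) \<partial>P) = 1 / (M + 1)"
    using SE(3) EA unfolding w_def m02[folded m20] m01[folded m10] by simp
  show "mm 1 0 / (1 - mm 2 0) = 1 / (M + 1)" by (rule EA)
  show "mm 2 0 < 1" by (rule m20l)
  show "mm 2 2 < 1" by (rule m22l)
qed



lemma var_algebra:
  fixes M :: real assumes M: "M > 0"
  shows "((1 - 4*(M/(M+1)) + 6*(M/(M+2)) - 4*(M/(M+3)) + M/(M+4)) + 2 * (M/(M+2) - 2*(M/(M+3)) + M/(M+4)) * (1/(M+1))) / (1 - M/(M+4)) - (1/(M+1))^2 = 2*M/((M+1)^2*(M+2)*(M+3))"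
proof -
  have p: "M+1 \<noteq> 0" "M+2 \<noteq> 0" "M+3 \<noteq> 0" "M+4 \<noteq> 0" using M by auto
  have s1: "1 - 4*(M/(M+1)) + 6*(M/(M+2)) - 4*(M/(M+3)) + M/(M+4) = 24/((M+1)*(M+2)*(M+3)*(M+4))"
    using p by (simp add: divide_simps) (simp add: algebra_simps)
  have s2: "M/(M+2) - 2*(M/(M+3)) + M/(M+4) = 2*M/((M+2)*(M+3)*(M+4))"
    using p by (simp add: divide_simps) (simp add: algebra_simps)
  have s3: "1 - M/(M+4) = 4/(M+4)" using p by (simp add: divide_simps)
  have s4: "(24/((M+1)*(M+2)*(M+3)*(M+4)) + 2*(2*M/((M+2)*(M+3)*(M+4)))*(1/(M+1))) / (4/(M+4)) = (6+M)/((M+1)*(M+2)*(M+3))"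
    using p by (simp add: divide_simps) (simp add: algebra_simps)
  have s5: "(6+M)/((M+1)*(M+2)*(M+3)) - (1/(M+1))^2 = 2*M/((M+1)^2*(M+2)*(M+3))"
    using p by (simp add: divide_simps) (simp add: algebra_simps power2_eq_square)
  show ?thesis unfolding s1 s2 s3 s4 s5 ..
qed

theorem proposition1:
  fixes P :: "'a measure"
    and S :: "real set"
    and M \<sigma>Z :: real
    and K :: "real \<Rightarrow> real"
    and Z :: "nat \<Rightarrow> real \<Rightarrow> 'a \<Rightarrow> real"
    and V :: "nat \<Rightarrow> real \<Rightarrow> 'a \<Rightarrow> real"
    and H :: "real \<Rightarrow> 'a \<Rightarrow> real"
  assumes "prob_space P"
    and "M > 0" and "\<sigma>Z > 0"
    and "K 0 = 1"
    and "\<And>j. centered_gaussian_process P S (\<lambda>x1 x2. \<sigma>Z\<^sup>2 * K (x1 - x2)) (Z j)"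
    and "prob_space.indep_vars P (\<lambda>_. Pi\<^sub>M S (\<lambda>_. borel))
           (\<lambda>j \<omega>. restrict (\<lambda>x. Z j x \<omega>) S) UNIV"
    and "\<And>j x \<omega>. V j x \<omega> = Beta_inv_cdf M (Phi \<sigma>Z (Z j x \<omega>))"
    and "\<And>x \<omega>. H x \<omega> = simpson (stick (\<lambda>j. V j x \<omega>))"
  shows "(\<forall>x\<in>S.
           integral\<^sup>L P (H x) = M / (1 + M) \<and>
           prob_space.variance P (H x) = 2 * M / ((M + 1)\<^sup>2 * (M + 2) * (M + 3))) \<and>
         (\<forall>x1\<in>S. \<forall>x2\<in>S.
           (let \<nu> = (\<lambda>i j. integral\<^sup>L P (\<lambda>\<omega>. V 0 x1 \<omega> ^ i * V 0 x2 \<omega> ^ j));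
                \<omega>' = (\<lambda>i j. integral\<^sup>L P (\<lambda>\<omega>. (1 - V 0 x1 \<omega>) ^ i * (1 - V 0 x2 \<omega>) ^ j));
                \<gamma> = (\<lambda>i j. integral\<^sup>L P (\<lambda>\<omega>. V 0 x1 \<omega> ^ i * (1 - V 0 x2 \<omega>) ^ j))
            in integral\<^sup>L P (\<lambda>\<omega>. (H x1 \<omega> - integral\<^sup>L P (H x1)) * (H x2 \<omega> - integral\<^sup>L P (H x2)))
               = (\<nu> 2 2 * (1 - \<omega>' 2 0) + 2 * \<nu> 2 0 * \<gamma> 2 2) / ((1 - \<omega>' 2 0) * (1 - \<omega>' 2 2))
                 - (\<nu> 1 0)\<^sup>2))"
proof -
  note P = assms(1) and M = assms(2) and s = assms(3) and K0 = assms(4) and gp = assms(5) and ind = assms(6)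
  interpret prob_space P by (rule P)
  have hV: "V j x \<omega> = hh M \<sigma>Z (Z j x \<omega>)" for j x \<omega> using assms(7) unfolding hh_def by simp
  define A where "A x \<omega> = (\<Sum>j. (stick (\<lambda>l. hh M \<sigma>Z (Z l x \<omega>)) j)^2)" for x \<omega>
  have HA: "H x \<omega> = 1 - A x \<omega>" for x \<omega>
    unfolding assms(8) simpson_def A_def hV ..
  have hm[measurable]: "hh M \<sigma>Z \<in> borel_measurable borel" using M s by (rule hh_meas)
  have hr: "0 \<le> hh M \<sigma>Z t \<and> hh M \<sigma>Z t \<le> 1" for t using hh_range[OF M s] .
  have Am[measurable]: "A x \<in> borel_measurable P" if "x \<in> S" for x
  proof -
    have [measurable]: "Z l x \<in> borel_measurable P" for l using gp_meas[OF gp that] .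
    show ?thesis unfolding A_def stick_def by measurable
  qed
  have Ar: "\<bar>A x \<omega>\<bar> \<le> 1" for x \<omega>
    using stick_facts[of "\<lambda>l. hh M \<sigma>Z (Z l x \<omega>)", OF hr] unfolding A_def by auto
  have Ai: "integrable P (A x)" if "x \<in> S" for x
    by (rule integrable_const_bound[where B=1]) (use Ar Am[OF that] in auto)
  have EA: "(\<integral>\<omega>. A x \<omega> \<partial>P) = 1 / (M + 1)" if "x \<in> S" for x
    using pair_result(2)[OF P M s K0 gp ind that that] unfolding A_def .
  have EH: "(\<integral>\<omega>. H x \<omega> \<partial>P) = 1 - 1 / (M + 1)" if "x \<in> S" for x
    unfolding HA using Ai[OF that] EA[OF that] by (simp add: prob_space)
  have cov: "(\<integral>\<omega>. (H x1 \<omega> - integral\<^sup>L P (H x1)) * (H x2 \<omega> - integral\<^sup>L P (H x2)) \<partial>P)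
      = (\<integral>\<omega>. A x1 \<omega> * A x2 \<omega> \<partial>P) - 1 / (M + 1) * (1 / (M + 1))" if x1: "x1 \<in> S" and x2: "x2 \<in> S" for x1 x2
  proof -
    have eqf: "(\<lambda>\<omega>. (H x1 \<omega> - integral\<^sup>L P (H x1)) * (H x2 \<omega> - integral\<^sup>L P (H x2)))
        = (\<lambda>\<omega>. (A x1 \<omega> - expectation (A x1)) * (A x2 \<omega> - expectation (A x2)))"
      unfolding EH[OF x1] EH[OF x2] EA[OF x1] EA[OF x2] by (rule ext) (simp add: HA algebra_simps)
    have "integral\<^sup>L P (\<lambda>\<omega>. (A x1 \<omega> - expectation (A x1)) * (A x2 \<omega> - expectation (A x2))) = (\<integral>\<omega>. A x1 \<omega> * A x2 \<omega> \<partial>P) - expectation (A x1) * expectation (A x2)"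
      by (rule cov_formula[OF Am[OF x1] Am[OF x2] Ar Ar])
    then show ?thesis unfolding eqf by (simp only: EA[OF x1] EA[OF x2])
  qed
  define mm where "mm x1 x2 a b = (\<integral>\<omega>. phi a (hh M \<sigma>Z (Z 0 x1 \<omega>)) * phi b (hh M \<sigma>Z (Z 0 x2 \<omega>)) \<partial>P)" for x1 x2 a b
  have EAA: "(\<integral>\<omega>. A x1 \<omega> * A x2 \<omega> \<partial>P) = (mm x1 x2 1 1 + 2 * mm x1 x2 1 2 * mm x1 x2 1 0 / (1 - mm x1 x2 2 0)) / (1 - mm x1 x2 2 2)"
    if x1: "x1 \<in> S" and x2: "x2 \<in> S" for x1 x2
    using pair_result(1)[OF P M s K0 gp ind x1 x2] unfolding A_def mm_def .
  have aux: "mm x1 x2 1 0 / (1 - mm x1 x2 2 0) = 1 / (M + 1)" "mm x1 x2 2 0 < 1" "mm x1 x2 2 2 < 1"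
    if x1: "x1 \<in> S" and x2: "x2 \<in> S" for x1 x2
    using pair_result(4-6)[OF P M s K0 gp ind x1 x2] unfolding mm_def by auto
  have PW: "(\<integral>\<omega>. c0 + c1 * (1 - hh M \<sigma>Z (Z 0 x \<omega>))^1 + c2 * (1 - hh M \<sigma>Z (Z 0 x \<omega>))^2
      + c3 * (1 - hh M \<sigma>Z (Z 0 x \<omega>))^3 + c4 * (1 - hh M \<sigma>Z (Z 0 x \<omega>))^4 \<partial>P)
    = c0 + c1 * (M/(M+1)) + c2 * (M/(M+2)) + c3 * (M/(M+3)) + c4 * (M/(M+4))" if "x \<in> S" for x c0 c1 c2 c3 c4
    by (rule polyW[OF P gp that K0 s M])
  have part1: "\<forall>x\<in>S. integral\<^sup>L P (H x) = M / (1 + M) \<and>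
           prob_space.variance P (H x) = 2 * M / ((M + 1)\<^sup>2 * (M + 2) * (M + 3))"
  proof
    fix x assume x: "x \<in> S"
    let ?W = "\<lambda>k \<omega>. (1 - hh M \<sigma>Z (Z 0 x \<omega>))^k"
    have Mp: "M + 1 \<noteq> 0" using M by simp
    have e1: "integral\<^sup>L P (H x) = M / (1 + M)" using EH[OF x] Mp by (simp add: field_simps)
    have m11: "mm x x 1 1 = 1 - 4*(M/(M+1)) + 6*(M/(M+2)) - 4*(M/(M+3)) + M/(M+4)"
    proof -
      have "(\<lambda>\<omega>. phi 1 (hh M \<sigma>Z (Z 0 x \<omega>)) * phi 1 (hh M \<sigma>Z (Z 0 x \<omega>))) = (\<lambda>\<omega>. 1 + (-4) * ?W 1 \<omega> + 6 * ?W 2 \<omega> + (-4) * ?W 3 \<omega> + 1 * ?W 4 \<omega>)"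
        by (rule ext) (simp add: phi_def power2_eq_square power3_eq_cube power4_eq_xxxx algebra_simps)
      note eq = this
      show ?thesis unfolding mm_def eq PW[OF x] by simp
    qed
    have m12: "mm x x 1 2 = M/(M+2) - 2*(M/(M+3)) + M/(M+4)"
    proof -
      have "(\<lambda>\<omega>. phi 1 (hh M \<sigma>Z (Z 0 x \<omega>)) * phi 2 (hh M \<sigma>Z (Z 0 x \<omega>))) = (\<lambda>\<omega>. 0 + 0 * ?W 1 \<omega> + 1 * ?W 2 \<omega> + (-2) * ?W 3 \<omega> + 1 * ?W 4 \<omega>)"
        by (rule ext) (simp add: phi_def power2_eq_square power3_eq_cube power4_eq_xxxx algebra_simps)
      note eq = this
      show ?thesis unfolding mm_def eq PW[OF x] by simp
    qed
    have m22: "mm x x 2 2 = M/(M+4)"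
    proof -
      have "(\<lambda>\<omega>. phi 2 (hh M \<sigma>Z (Z 0 x \<omega>)) * phi 2 (hh M \<sigma>Z (Z 0 x \<omega>))) = (\<lambda>\<omega>. 0 + 0 * ?W 1 \<omega> + 0 * ?W 2 \<omega> + 0 * ?W 3 \<omega> + 1 * ?W 4 \<omega>)"
        by (rule ext) (simp add: phi_def power2_eq_square power4_eq_xxxx algebra_simps)
      note eq = this
      show ?thesis unfolding mm_def eq PW[OF x] by simp
    qed
    have "prob_space.variance P (H x) = (\<integral>\<omega>. (H x \<omega> - integral\<^sup>L P (H x)) * (H x \<omega> - integral\<^sup>L P (H x)) \<partial>P)"
      by (simp add: power2_eq_square)
    also have "\<dots> = (\<integral>\<omega>. A x \<omega> * A x \<omega> \<partial>P) - 1 / (M + 1) * (1 / (M + 1))" by (rule cov[OF x x])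
    also have "\<dots> = (mm x x 1 1 + 2 * mm x x 1 2 * (mm x x 1 0 / (1 - mm x x 2 0))) / (1 - mm x x 2 2) - (1/(M+1))^2"
      unfolding EAA[OF x x] by (simp add: power2_eq_square)
    also have "\<dots> = 2 * M / ((M + 1)\<^sup>2 * (M + 2) * (M + 3))"
      unfolding aux(1)[OF x x] m11 m12 m22 using var_algebra[OF M] by (simp add: mult.assoc)
    finally show "integral\<^sup>L P (H x) = M / (1 + M) \<and> prob_space.variance P (H x) = 2 * M / ((M + 1)\<^sup>2 * (M + 2) * (M + 3))"
      using e1 by simp
  qed
  have part2: "\<forall>x1\<in>S. \<forall>x2\<in>S.
           (let \<nu> = (\<lambda>i j. integral\<^sup>L P (\<lambda>\<omega>. V 0 x1 \<omega> ^ i * V 0 x2 \<omega> ^ j));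
                \<omega>' = (\<lambda>i j. integral\<^sup>L P (\<lambda>\<omega>. (1 - V 0 x1 \<omega>) ^ i * (1 - V 0 x2 \<omega>) ^ j));
                \<gamma> = (\<lambda>i j. integral\<^sup>L P (\<lambda>\<omega>. V 0 x1 \<omega> ^ i * (1 - V 0 x2 \<omega>) ^ j))
            in integral\<^sup>L P (\<lambda>\<omega>. (H x1 \<omega> - integral\<^sup>L P (H x1)) * (H x2 \<omega> - integral\<^sup>L P (H x2)))
               = (\<nu> 2 2 * (1 - \<omega>' 2 0) + 2 * \<nu> 2 0 * \<gamma> 2 2) / ((1 - \<omega>' 2 0) * (1 - \<omega>' 2 2))
                 - (\<nu> 1 0)\<^sup>2)"
  proof (intro ballI)
    fix x1 x2 assume x1: "x1 \<in> S" and x2: "x2 \<in> S"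
    have n22: "integral\<^sup>L P (\<lambda>\<omega>. V 0 x1 \<omega> ^ 2 * V 0 x2 \<omega> ^ 2) = mm x1 x2 1 1" unfolding mm_def hV by (simp add: phi_def)
    have n20: "integral\<^sup>L P (\<lambda>\<omega>. V 0 x1 \<omega> ^ 2 * V 0 x2 \<omega> ^ 0) = mm x1 x2 1 0" unfolding mm_def hV by (simp add: phi_def)
    have o20: "integral\<^sup>L P (\<lambda>\<omega>. (1 - V 0 x1 \<omega>) ^ 2 * (1 - V 0 x2 \<omega>) ^ 0) = mm x1 x2 2 0" unfolding mm_def hV by (simp add: phi_def)
    have o22: "integral\<^sup>L P (\<lambda>\<omega>. (1 - V 0 x1 \<omega>) ^ 2 * (1 - V 0 x2 \<omega>) ^ 2) = mm x1 x2 2 2" unfolding mm_def hV by (simp add: phi_def)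
    have g22: "integral\<^sup>L P (\<lambda>\<omega>. V 0 x1 \<omega> ^ 2 * (1 - V 0 x2 \<omega>) ^ 2) = mm x1 x2 1 2" unfolding mm_def hV by (simp add: phi_def)
    have n10: "integral\<^sup>L P (\<lambda>\<omega>. V 0 x1 \<omega> ^ 1 * V 0 x2 \<omega> ^ 0) = 1 / (M + 1)"
    proof -
      let ?W = "\<lambda>k \<omega>. (1 - hh M \<sigma>Z (Z 0 x1 \<omega>))^k"
      have "(\<lambda>\<omega>. V 0 x1 \<omega> ^ 1 * V 0 x2 \<omega> ^ 0) = (\<lambda>\<omega>. 1 + (-1) * ?W 1 \<omega> + 0 * ?W 2 \<omega> + 0 * ?W 3 \<omega> + 0 * ?W 4 \<omega>)"
        by (rule ext) (simp add: hV)
      note eq = this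
      have "integral\<^sup>L P (\<lambda>\<omega>. V 0 x1 \<omega> ^ 1 * V 0 x2 \<omega> ^ 0) = 1 - M / (M + 1)" unfolding eq PW[OF x1] by simp
      also have "\<dots> = 1 / (M + 1)" using M by (simp add: field_simps)
      finally show ?thesis .
    qed
    have d1: "1 - mm x1 x2 2 0 \<noteq> 0" using aux(2)[OF x1 x2] by simp
    have d2: "1 - mm x1 x2 2 2 \<noteq> 0" using aux(3)[OF x1 x2] by simp
    have "integral\<^sup>L P (\<lambda>\<omega>. (H x1 \<omega> - integral\<^sup>L P (H x1)) * (H x2 \<omega> - integral\<^sup>L P (H x2)))
        = (mm x1 x2 1 1 + 2 * mm x1 x2 1 2 * mm x1 x2 1 0 / (1 - mm x1 x2 2 0)) / (1 - mm x1 x2 2 2) - (1 / (M + 1))^2"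
      unfolding cov[OF x1 x2] EAA[OF x1 x2] by (simp add: power2_eq_square)
    also have "\<dots> = (mm x1 x2 1 1 * (1 - mm x1 x2 2 0) + 2 * mm x1 x2 1 0 * mm x1 x2 1 2) / ((1 - mm x1 x2 2 0) * (1 - mm x1 x2 2 2)) - (1 / (M + 1))^2"
      using d1 d2 by (simp add: field_simps)
    finally show "let \<nu> = (\<lambda>i j. integral\<^sup>L P (\<lambda>\<omega>. V 0 x1 \<omega> ^ i * V 0 x2 \<omega> ^ j));
                \<omega>' = (\<lambda>i j. integral\<^sup>L P (\<lambda>\<omega>. (1 - V 0 x1 \<omega>) ^ i * (1 - V 0 x2 \<omega>) ^ j));
                \<gamma> = (\<lambda>i j. integral\<^sup>L P (\<lambda>\<omega>. V 0 x1 \<omega> ^ i * (1 - V 0 x2 \<omega>) ^ j))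
            in integral\<^sup>L P (\<lambda>\<omega>. (H x1 \<omega> - integral\<^sup>L P (H x1)) * (H x2 \<omega> - integral\<^sup>L P (H x2)))
               = (\<nu> 2 2 * (1 - \<omega>' 2 0) + 2 * \<nu> 2 0 * \<gamma> 2 2) / ((1 - \<omega>' 2 0) * (1 - \<omega>' 2 2))
                 - (\<nu> 1 0)\<^sup>2"
      unfolding Let_def n22 n20 o20 o22 g22 n10 .
  qed
  show ?thesis using part1 part2 by blast
qed


end
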